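(* Let $\Psi=(\Gamma_1,\dots,\Gamma_r)$ and $\Psi'=(\Gamma'_1,\dots,\Gamma'_r)$ be tripartite states of format $r\times I_1\times I_2$ with $\Gamma_1,\dots,\Gamma_r$ linearly independent and $\Gamma'_1,\dots,\Gamma'_r$ linearly independent. Let $U,U'$ be the invertible matrices built from these states and chosen complementary states. Consider the following condition: ( * ) there exist an invertible $P\in\mathbb C^{r\times r}$, an invertible $\overline P\in\mathbb C^{(I_1I_2-r)\times(I_1I_2-r)}$ and some $Y$ such that, with $\widetilde P=\begin{pmatrix}P&Y\\0&\overline P\end{pmatrix}$, $$\operatorname{rank}\mathcal W\big(U\widetilde P\,U'^{-1}\vec a\big)=\operatorname{rank}\mathcal W(\vec a)\quad\text{for every }\vec a\in\mathbb C^{I_1I_2}.$$ (a) If $\Psi'$ and $\Psi$ are SLOCC equivalent, then ( * ) holds. (b) If $I_1\neq I_2$ and ( * ) holds, then $\Psi'$ and $\Psi$ are SLOCC equivalent. (c) If $I_1=I_2$ and ( * ) holds, then $\Psi'$ is SLOCC equivalent either to $\Psi$ or to $\Psi^{\mathrm T}:=(\Gamma_1^{\mathrm T},\dots,\Gamma_r^{\mathrm T})$. The state $\Psi^{\mathrm T}$ is $\Psi$ with the second and third parties exchanged.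
   Context: **Tripartite states as tuples.** A tuple $(\Gamma_1,\dots,\Gamma_r)$ with $\Gamma_k\in\mathbb C^{I_1\times I_2}$ denotes the state $$\sum_k\sum_{i_1,i_2}(\Gamma_k)_{i_1i_2}|k\rangle|i_1\rangle|i_2\rangle.$$ **SLOCC equivalence.** Two such states are SLOCC equivalent if they are related by $P_0\otimes A_1\otimes A_2$ with $P_0,A_1,A_2$ invertible, i.e. $\Gamma'_k=\sum_l(P_0)_{kl}A_1\Gamma_lA_2^{\mathrm T}$. **Vectorization and folding.** $\mathcal V(\Gamma)$ is the column-stacking vectorization of $\Gamma\in\mathbb C^{I_1\times I_2}$, namely $(\Gamma_{11},\dots,\Gamma_{I_11},\Gamma_{12},\dots,\Gamma_{I_1I_2})^{\mathrm T}$. For $\vec a=(a_1,\dots,a_{I_1I_2})^{\mathrm T}$, the folding $\mathcal W(\vec a)\in\mathbb C^{I_1\times I_2}$ is the inverse operation, with $(p,q)$ entry $a_{(q-1)I_1+p}$. **Complementary state.** A complementary state of $(\Gamma_1,\dots,\Gamma_r)$ is any tuple $(\Gamma_{r+1},\dots,\Gamma_{I_1I_2})$ such that $\Gamma_1,\dots,\Gamma_{I_1I_2}$ form a basis of $\mathbb C^{I_1\times I_2}$. **The matrices $U,U'$.** Given complementary states, set $U=(\mathcal V(\Gamma_1),\dots,\mathcal V(\Gamma_{I_1I_2}))$ and $U'=(\mathcal V(\Gamma'_1),\dots,\mathcal V(\Gamma'_{I_1I_2}))$. *)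

theory Defs
  imports Complex_Main "Jordan_Normal_Form.DL_Rank" "Jordan_Normal_Form.Gauss_Jordan_Elimination"
begin

definition state_fmt :: "nat \<Rightarrow> nat \<Rightarrow> nat \<Rightarrow> complex mat list \<Rightarrow> bool" where
  "state_fmt r I1 I2 Gs \<longleftrightarrow> length Gs = r \<and> (\<forall>G\<in>set Gs. G \<in> carrier_mat I1 I2)"

definition lincomb_mats :: "nat \<Rightarrow> nat \<Rightarrow> (nat \<Rightarrow> complex) \<Rightarrow> complex mat list \<Rightarrow> complex mat" where
  "lincomb_mats I1 I2 c Gs = foldr (\<lambda>i acc. c i \<cdot>\<^sub>m (Gs ! i) + acc) [0..<length Gs] (0\<^sub>m I1 I2)"

definition lin_indep_mats :: "nat \<Rightarrow> nat \<Rightarrow> complex mat list \<Rightarrow> bool" where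
  "lin_indep_mats I1 I2 Gs \<longleftrightarrow>
     (\<forall>c. lincomb_mats I1 I2 c Gs = 0\<^sub>m I1 I2 \<longrightarrow> (\<forall>i<length Gs. c i = 0))"

definition basis_mats :: "nat \<Rightarrow> nat \<Rightarrow> complex mat list \<Rightarrow> bool" where
  "basis_mats I1 I2 Gs \<longleftrightarrow> (\<forall>G\<in>set Gs. G \<in> carrier_mat I1 I2) \<and>
     (\<forall>M\<in>carrier_mat I1 I2. \<exists>!c. c \<in> carrier_vec (length Gs) \<and>
         M = lincomb_mats I1 I2 (\<lambda>i. c $ i) Gs)"

definition complementary :: "nat \<Rightarrow> nat \<Rightarrow> complex mat list \<Rightarrow> complex mat list \<Rightarrow> bool" where
  "complementary I1 I2 Gs C \<longleftrightarrow> length C = I1 * I2 - length Gs \<and> basis_mats I1 I2 (Gs @ C)"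

text \<open>Column-stacking vectorization and folding (0-based: entry (p,q) sits at index q*I1+p).\<close>
definition vecz :: "nat \<Rightarrow> nat \<Rightarrow> complex mat \<Rightarrow> complex vec" where
  "vecz I1 I2 G = vec (I1 * I2) (\<lambda>i. G $$ (i mod I1, i div I1))"

definition foldv :: "nat \<Rightarrow> nat \<Rightarrow> complex vec \<Rightarrow> complex mat" where
  "foldv I1 I2 a = mat I1 I2 (\<lambda>(p, q). a $ (q * I1 + p))"

definition U_mat :: "nat \<Rightarrow> nat \<Rightarrow> complex mat list \<Rightarrow> complex mat" where
  "U_mat I1 I2 Gs = mat_of_cols (I1 * I2) (map (vecz I1 I2) Gs)"

definition mat_inv :: "complex mat \<Rightarrow> complex mat" where
  "mat_inv A = the (mat_inverse A)"

definition mrank :: "complex mat \<Rightarrow> nat" where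
  "mrank A = vec_space.rank (dim_row A) A"

definition cond_star :: "nat \<Rightarrow> nat \<Rightarrow> nat \<Rightarrow> complex mat \<Rightarrow> complex mat \<Rightarrow> bool" where
  "cond_star r I1 I2 U U' \<longleftrightarrow>
    (\<exists>P Pb Y. P \<in> carrier_mat r r \<and> invertible_mat P \<and>
       Pb \<in> carrier_mat (I1 * I2 - r) (I1 * I2 - r) \<and> invertible_mat Pb \<and>
       Y \<in> carrier_mat r (I1 * I2 - r) \<and>
       (let Pt = four_block_mat P Y (0\<^sub>m (I1 * I2 - r) r) Pb in
        \<forall>a\<in>carrier_vec (I1 * I2).
          mrank (foldv I1 I2 (U * Pt * mat_inv U' *\<^sub>v a)) = mrank (foldv I1 I2 a)))"

text \<open>SLOCC equivalence: Gs' = (P0 \<otimes> A1 \<otimes> A2) Gs.\<close>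
definition slocc_equiv :: "nat \<Rightarrow> nat \<Rightarrow> complex mat list \<Rightarrow> complex mat list \<Rightarrow> bool" where
  "slocc_equiv I1 I2 Gs' Gs \<longleftrightarrow> length Gs' = length Gs \<and>
    (\<exists>P0 A1 A2. P0 \<in> carrier_mat (length Gs) (length Gs) \<and> invertible_mat P0 \<and>
       A1 \<in> carrier_mat I1 I1 \<and> invertible_mat A1 \<and>
       A2 \<in> carrier_mat I2 I2 \<and> invertible_mat A2 \<and>
       (\<forall>k<length Gs. Gs' ! k =
          lincomb_mats I1 I2 (\<lambda>l. P0 $$ (k, l)) (map (\<lambda>G. A1 * G * transpose_mat A2) Gs)))"

end

theory Submission
  imports Defs "Jordan_Normal_Form.DL_Rank_Submatrix"
begin

lemma inv_mat_iff:
  assumes A: "A \<in> carrier_mat n n"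
  shows "invertible_mat A \<longleftrightarrow> (\<exists>B\<in>carrier_mat n n. A * B = 1\<^sub>m n \<and> B * A = 1\<^sub>m n)"
proof
  assume "invertible_mat A"
  then obtain B where AB: "A * B = 1\<^sub>m n" and BA: "B * A = 1\<^sub>m (dim_row B)"
    using A unfolding invertible_mat_def inverts_mat_def by auto
  have "dim_col B = n" using AB by (metis index_mult_mat(3) index_one_mat(3))
  moreover have "dim_row B = n" using BA A by (metis carrier_matD(2) index_mult_mat(3) index_one_mat(3))
  ultimately show "\<exists>B\<in>carrier_mat n n. A * B = 1\<^sub>m n \<and> B * A = 1\<^sub>m n" using AB BA by auto
next
  assume "\<exists>B\<in>carrier_mat n n. A * B = 1\<^sub>m n \<and> B * A = 1\<^sub>m n"
  then show "invertible_mat A" using A unfolding invertible_mat_def inverts_mat_def square_mat.simps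
    by auto
qed

lemma det_ne0_invertible:
  assumes A: "(A::'a::field mat) \<in> carrier_mat n n" and d: "det A \<noteq> 0"
  shows "invertible_mat A"
proof -
  have "A \<in> Units (ring_mat TYPE('a) n ())" using det_non_zero_imp_unit[OF A d] .
  then obtain B where "B \<in> carrier_mat n n" "B * A = 1\<^sub>m n" "A * B = 1\<^sub>m n"
    unfolding Units_def by (auto simp: ring_mat_simps)
  then show ?thesis using inv_mat_iff[OF A] by auto
qed

lemma invertible_det_ne0:
  assumes A: "A \<in> carrier_mat n n" and i: "invertible_mat A"
  shows "det (A::'a::field mat) \<noteq> 0"
proof -
  obtain B where B: "B \<in> carrier_mat n n" "A * B = 1\<^sub>m n" using i inv_mat_iff[OF A] by auto
  have "det A * det B = 1" using det_mult[OF A B(1)] B(2) by simp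
  then show ?thesis by auto
qed

lemma inj_invertible:
  assumes A: "(A::'a::field mat) \<in> carrier_mat n n"
    and inj: "\<And>v. v \<in> carrier_vec n \<Longrightarrow> A *\<^sub>v v = 0\<^sub>v n \<Longrightarrow> v = 0\<^sub>v n"
  shows "invertible_mat A"
  using det_ne0_invertible[OF A] det_0_iff_vec_prod_zero_field[OF A] inj by blast

lemma invertible_inj:
  assumes A: "(A::'a::field mat) \<in> carrier_mat n n" and i: "invertible_mat A"
    and v: "v \<in> carrier_vec n" and Av: "A *\<^sub>v v = 0\<^sub>v n"
  shows "v = 0\<^sub>v n"
  using invertible_det_ne0[OF A i] det_0_iff_vec_prod_zero_field[OF A] v Av by blast

definition r1 :: "complex mat \<Rightarrow> bool" where
  "r1 X \<longleftrightarrow> (\<forall>p q s t. p < dim_row X \<longrightarrow> q < dim_row X \<longrightarrow> s < dim_col X \<longrightarrow> t < dim_col X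
      \<longrightarrow> X $$ (p,s) * X $$ (q,t) = X $$ (p,t) * X $$ (q,s))"

lemma r1_product:
  assumes "r1 X"
  shows "\<exists>f g. \<forall>r c. r < dim_row X \<longrightarrow> c < dim_col X \<longrightarrow> X $$ (r,c) = f r * g c"
proof (cases "\<exists>p q. p < dim_row X \<and> q < dim_col X \<and> X $$ (p,q) \<noteq> 0")
  case True
  then obtain p0 q0 where pq: "p0 < dim_row X" "q0 < dim_col X" "X $$ (p0,q0) \<noteq> 0" by auto
  show ?thesis
  proof (intro exI allI impI)
    fix r c assume rc: "r < dim_row X" "c < dim_col X"
    have "X $$ (r,c) * X $$ (p0,q0) = X $$ (r,q0) * X $$ (p0,c)"
      using assms rc pq unfolding r1_def by blast
    then show "X $$ (r,c) = X $$ (r,q0) * (X $$ (p0,c) / X $$ (p0,q0))"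
      using pq(3) by (simp add: field_simps)
  qed
next
  case False
  then show ?thesis by (intro exI[of _ "\<lambda>_. 0"]) auto
qed

lemma det_1x1: assumes A: "(A::'a::field mat) \<in> carrier_mat 1 1" shows "det A = A $$ (0,0)"
proof -
  have "det A = (\<Sum>i<1. A $$ (i,0) * cofactor A i 0)" using laplace_expansion_column[OF A, of 0] by simp
  also have "\<dots> = A $$ (0,0)" unfolding cofactor_def using A det_dim_zero[of "mat_delete A 0 0"] mat_delete_carrier[OF A, of 0 0] by simp
  finally show ?thesis .
qed

lemma det_2x2: assumes A: "(A::'a::field mat) \<in> carrier_mat 2 2"
  shows "det A = A $$ (0,0) * A $$ (1,1) - A $$ (0,1) * A $$ (1,0)"
proof -
  have "det A = (\<Sum>i<2. A $$ (i,0) * cofactor A i 0)" using laplace_expansion_column[OF A, of 0] by simp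
  also have "\<dots> = A $$ (0,0) * cofactor A 0 0 + A $$ (1,0) * cofactor A 1 0"
    by (simp add: numeral_2_eq_2)
  also have "cofactor A 0 0 = A $$ (1,1)" unfolding cofactor_def
    using A by (subst det_1x1) (auto simp: mat_delete_def mat_delete_carrier)
  also have "cofactor A 1 0 = - A $$ (0,1)" unfolding cofactor_def
    using A by (subst det_1x1) (auto simp: mat_delete_def mat_delete_carrier)
  finally show ?thesis by simp
qed

lemma pick2: assumes "(p::nat) < q" shows "pick {p,q} 0 = p" "pick {p,q} 1 = q"
proof -
  have "{a \<in> {p,q}. a < p} = {}" using assms by auto
  then show "pick {p,q} 0 = p" using pick_card_in_set[of p "{p,q}"] by (metis card.empty insertI1)
  have "{a \<in> {p,q}. a < q} = {p}" using assms by auto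
  then show "pick {p,q} 1 = q" using pick_card_in_set[of q "{p,q}"] by (metis One_nat_def card_1_singleton_iff insertI1 insert_commute)
qed

lemma minor_rank2:
  assumes X: "X \<in> carrier_mat m n" and pq: "p < q" "q < m" and st: "s < t" "t < n"
    and ne: "X $$ (p,s) * X $$ (q,t) - X $$ (p,t) * X $$ (q,s) \<noteq> 0"
  shows "2 \<le> mrank X"
proof -
  have c1: "{i. i < dim_row X \<and> i \<in> {p,q}} = {p,q}" using X pq by auto
  have c2: "{i. i < dim_col X \<and> i \<in> {s,t}} = {s,t}" using X st by auto
  have cp: "card {p,q} = 2" "card {s,t} = 2" using pq st by auto
  let ?S = "submatrix X {p,q} {s,t}"
  have S: "?S \<in> carrier_mat 2 2" unfolding submatrix_def c1 c2 cp by simp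
  have e: "?S $$ (i,j) = X $$ (pick {p,q} i, pick {s,t} j)" if "i < 2" "j < 2" for i j
    using submatrix_index[of i X "{p,q}" j "{s,t}"] that unfolding c1 c2 cp by simp
  have "det ?S = X $$ (p,s) * X $$ (q,t) - X $$ (p,t) * X $$ (q,s)"
    unfolding det_2x2[OF S] using e[of 0 0] e[of 0 1] e[of 1 0] e[of 1 1] pick2[OF pq(1)] pick2[OF st(1)]
    by simp
  with ne have "det ?S \<noteq> 0" by simp
  from vec_space.rank_gt_minor[OF X this]
  have "card {j. j < n \<and> j \<in> {s,t}} \<le> vec_space.rank m X" .
  moreover have "{j. j < n \<and> j \<in> {s,t}} = {s,t}" using st by auto
  ultimately show ?thesis unfolding mrank_def using X cp by auto
qed

lemma rank_r1:
  assumes X: "X \<in> carrier_mat m n"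
  shows "mrank X \<le> 1 \<longleftrightarrow> r1 X"
proof
  assume "r1 X"
  from r1_product[OF this] obtain f g where fg: "\<And>r c. r < dim_row X \<Longrightarrow> c < dim_col X \<Longrightarrow> X $$ (r,c) = f r * g c"
    by blast
  show "mrank X \<le> 1" unfolding mrank_def using vec_space.rank_le_1_product_entries[OF X fg] X by auto
next
  assume rk: "mrank X \<le> 1"
  show "r1 X" unfolding r1_def
  proof (intro allI impI, rule ccontr)
    fix p q s t assume b: "p < dim_row X" "q < dim_row X" "s < dim_col X" "t < dim_col X"
      and ne0: "X $$ (p,s) * X $$ (q,t) \<noteq> X $$ (p,t) * X $$ (q,s)"
    have pq: "p \<noteq> q" and st: "s \<noteq> t" using ne0 by (auto simp: mult.commute)
    define p' q' s' t' where defs: "p' = min p q" "q' = max p q" "s' = min s t" "t' = max s t"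
    have ne: "X $$ (p',s') * X $$ (q',t') - X $$ (p',t') * X $$ (q',s') \<noteq> 0"
      using ne0 unfolding defs
      by (cases "p < q"; cases "s < t") (auto simp: min_def max_def algebra_simps)
    have "2 \<le> mrank X"
      by (rule minor_rank2[OF X _ _ _ _ ne]) (use b pq st X in \<open>auto simp: defs\<close>)
    with rk show False by simp
  qed
qed

lemma (in vec_space) rank_mult_left_inv:
  assumes A: "A \<in> carrier_mat n n" and Ai: "invertible_mat A" and X: "X \<in> carrier_mat n nc"
  shows "rank (A * X) = rank X"
proof -
  have AX: "A * X \<in> carrier_mat n nc" using A X by auto
  have cs: "span (set (cols Y)) = {y \<in> carrier_vec n. \<exists>x\<in>carrier_vec nc. Y *\<^sub>v x = y}"
    if "Y \<in> carrier_mat n nc" for Y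
    using col_space_eq[OF that] that unfolding col_space_def by auto
  define V1 where "V1 = span_vs (set (cols X))"
  define W1 where "W1 = span_vs (set (cols (A * X)))"
  have vV: "vectorspace class_ring V1" unfolding V1_def
    using span_is_subspace[THEN subspace_is_vs, of "set (cols X)"] X cols_dim by auto
  have vW: "vectorspace class_ring W1" unfolding W1_def
    using span_is_subspace[THEN subspace_is_vs, of "set (cols (A*X))"] cols_dim[of "A*X"] AX by auto
  have cV: "carrier V1 = {y \<in> carrier_vec n. \<exists>x\<in>carrier_vec nc. X *\<^sub>v x = y}"
    unfolding V1_def using cs[OF X] by simp
  have cW: "carrier W1 = {y \<in> carrier_vec n. \<exists>x\<in>carrier_vec nc. (A * X) *\<^sub>v x = y}"
    unfolding W1_def using cs[OF AX] by simp
  let ?T = "\<lambda>v. A *\<^sub>v v"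
  have img: "?T ` carrier V1 = carrier W1"
  proof
    show "?T ` carrier V1 \<subseteq> carrier W1"
      unfolding cV cW using A X by (auto simp: assoc_mult_mat_vec)
    show "carrier W1 \<subseteq> ?T ` carrier V1"
    proof
      fix y assume "y \<in> carrier W1"
      then obtain x where x: "x \<in> carrier_vec nc" "y = (A * X) *\<^sub>v x" unfolding cW by auto
      then have "y = A *\<^sub>v (X *\<^sub>v x)" using A X by (simp add: assoc_mult_mat_vec)
      moreover have "X *\<^sub>v x \<in> carrier V1" unfolding cV using x X by auto
      ultimately show "y \<in> ?T ` carrier V1" by auto
    qed
  qed
  have inj: "inj_on ?T (carrier V1)"
  proof (rule inj_onI)
    fix u v assume u: "u \<in> carrier V1" and v: "v \<in> carrier V1" and e: "A *\<^sub>v u = A *\<^sub>v v"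
    have uv: "u \<in> carrier_vec n" "v \<in> carrier_vec n" using u v unfolding cV by auto
    have "A *\<^sub>v (u - v) = 0\<^sub>v n" using e A uv by (simp add: mult_minus_distrib_mat_vec)
    then have "u - v = 0\<^sub>v n"
      using invertible_inj[OF A Ai] uv by auto
    show "u = v"
    proof (rule eq_vecI)
      fix i assume i: "i < dim_vec v"
      have "(u - v) $ i = 0" using \<open>u - v = 0\<^sub>v n\<close> uv i by simp
      then show "u $ i = v $ i" using uv i by simp
    qed (use uv in auto)
  qed
  have lm: "linear_map class_ring V1 W1 ?T"
    unfolding linear_map_def mod_hom_def mod_hom_axioms_def
  proof (intro conjI)
    show "vectorspace class_ring V1" "vectorspace class_ring W1" by fact+
    show "Module.module class_ring V1" "Module.module class_ring W1" using vV vW by (auto simp: vectorspace_def)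
    show "?T \<in> LinearCombinations.module_hom class_ring V1 W1"
      unfolding LinearCombinations.module_hom_def mem_Collect_eq
    proof (intro conjI allI impI)
      show "?T \<in> carrier V1 \<rightarrow> carrier W1" using img by auto
      fix m1 m2 assume "m1 \<in> carrier V1 \<and> m2 \<in> carrier V1"
      then have "m1 \<in> carrier_vec n" "m2 \<in> carrier_vec n" unfolding cV by auto
      then show "A *\<^sub>v (m1 \<oplus>\<^bsub>V1\<^esub> m2) = (A *\<^sub>v m1) \<oplus>\<^bsub>W1\<^esub> (A *\<^sub>v m2)"
        unfolding V1_def W1_def by (simp add: mult_add_distrib_mat_vec[OF A])
    next
      fix r :: 'a and m assume "r \<in> carrier class_ring \<and> m \<in> carrier V1"
      then have "m \<in> carrier_vec n" unfolding cV by auto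
      then show "A *\<^sub>v (r \<odot>\<^bsub>V1\<^esub> m) = r \<odot>\<^bsub>W1\<^esub> (A *\<^sub>v m)"
        unfolding V1_def W1_def by (simp add: mult_mat_vec[OF A])
    qed
  qed
  have fd: "vectorspace.fin_dim class_ring V1" unfolding V1_def using fin_dim_span_cols[OF X] .
  have "vectorspace.dim class_ring V1 = vectorspace.dim class_ring W1"
    using linear_map.dim_eq[OF lm fd inj img] .
  then show ?thesis unfolding rank_def V1_def W1_def by simp
qed

lemma (in vec_space) rank_mult_right_inv:
  assumes B: "B \<in> carrier_mat nc nc" and Bi: "invertible_mat B" and X: "X \<in> carrier_mat n nc"
  shows "rank (X * B) = rank X"
proof -
  have Bt: "invertible_mat B\<^sup>T" using Bi B proof -
    obtain C where C: "C \<in> carrier_mat nc nc" "B * C = 1\<^sub>m nc" "C * B = 1\<^sub>m nc" using Bi inv_mat_iff[OF B] by auto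
    have e1: "B\<^sup>T * C\<^sup>T = (C*B)\<^sup>T" using transpose_mult[OF C(1) B] by simp
    have e2: "C\<^sup>T * B\<^sup>T = (B*C)\<^sup>T" using transpose_mult[OF B C(1)] by simp
    have "B\<^sup>T * C\<^sup>T = 1\<^sub>m nc" "C\<^sup>T * B\<^sup>T = 1\<^sub>m nc" unfolding e1 e2 C(2) C(3) by simp_all
    moreover have "B\<^sup>T \<in> carrier_mat nc nc" "C\<^sup>T \<in> carrier_mat nc nc" using B C by auto
    ultimately show ?thesis using inv_mat_iff[of "B\<^sup>T" nc] by blast
  qed
  have "row_space (B\<^sup>T * X\<^sup>T) = row_space X\<^sup>T"
    by (rule row_space_is_preserved[OF Bt]) (use B X in auto)
  moreover have "B\<^sup>T * X\<^sup>T = (X * B)\<^sup>T" using B X by (simp add: transpose_mult)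
  ultimately have "col_space (X * B) = col_space X"
    unfolding col_space_eq_row_space_transpose by simp
  then show ?thesis unfolding rank_def col_space_def by simp
qed

definition opm :: "complex vec \<Rightarrow> complex vec \<Rightarrow> complex mat" where
  "opm x y = mat (dim_vec x) (dim_vec y) (\<lambda>(p,q). x $ p * y $ q)"

definition Em :: "nat \<Rightarrow> nat \<Rightarrow> nat \<Rightarrow> nat \<Rightarrow> complex mat" where
  "Em m n i j = mat m n (\<lambda>(p,q). if p = i \<and> q = j then 1 else 0)"

definition par :: "complex vec \<Rightarrow> complex vec \<Rightarrow> bool" where
  "par u v \<longleftrightarrow> (\<forall>p q. p < dim_vec u \<longrightarrow> q < dim_vec u \<longrightarrow> u $ p * v $ q = u $ q * v $ p)"

lemma opm_carrier[simp]: "opm x y \<in> carrier_mat (dim_vec x) (dim_vec y)"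
  unfolding opm_def by simp
lemma opm_dims[simp]: "dim_row (opm x y) = dim_vec x" "dim_col (opm x y) = dim_vec y"
  unfolding opm_def by simp_all
lemma opm_index[simp]: "p < dim_vec x \<Longrightarrow> q < dim_vec y \<Longrightarrow> opm x y $$ (p,q) = x $ p * y $ q"
  unfolding opm_def by simp
lemma opm_transpose: "(opm x y)\<^sup>T = opm y x"
  by (rule eq_matI) (auto simp: mult.commute)

lemma Em_carrier[simp]: "Em m n i j \<in> carrier_mat m n" unfolding Em_def by simp
lemma Em_dims[simp]: "dim_row (Em m n i j) = m" "dim_col (Em m n i j) = n" unfolding Em_def by simp_all
lemma Em_index[simp]: "p < m \<Longrightarrow> q < n \<Longrightarrow> Em m n i j $$ (p,q) = (if p = i \<and> q = j then 1 else 0)"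
  unfolding Em_def by simp

lemma r1_prod_form:
  assumes "\<And>p s. p < dim_row X \<Longrightarrow> s < dim_col X \<Longrightarrow> X $$ (p,s) = f p * g s"
  shows "r1 X"
  unfolding r1_def using assms by (simp add: algebra_simps)

lemma r1_opm: "r1 (opm x y)"
  by (rule r1_prod_form[of _ "\<lambda>p. x $ p" "\<lambda>q. y $ q"]) simp

lemma r1_nonzero_opm:
  assumes X: "X \<in> carrier_mat m n" and r: "r1 X" and nz: "X \<noteq> 0\<^sub>m m n"
  shows "\<exists>x y. X = opm x y \<and> x \<in> carrier_vec m \<and> y \<in> carrier_vec n \<and> x \<noteq> 0\<^sub>v m \<and> y \<noteq> 0\<^sub>v n"
proof -
  have "\<exists>p q. p < m \<and> q < n \<and> X $$ (p,q) \<noteq> 0"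
  proof (rule ccontr)
    assume "\<not> ?thesis"
    then have "X = 0\<^sub>m m n" using X by (intro eq_matI) auto
    with nz show False by simp
  qed
  then obtain p0 q0 where pq: "p0 < m" "q0 < n" "X $$ (p0,q0) \<noteq> 0" by auto
  define x where "x = vec m (\<lambda>r. X $$ (r,q0))"
  define y where "y = vec n (\<lambda>c. X $$ (p0,c) / X $$ (p0,q0))"
  have "X = opm x y"
  proof (rule eq_matI)
    fix r c assume rc: "r < dim_row (opm x y)" "c < dim_col (opm x y)"
    then have rc': "r < m" "c < n" by (auto simp: x_def y_def)
    have "X $$ (r,c) * X $$ (p0,q0) = X $$ (r,q0) * X $$ (p0,c)"
      using r rc' pq X unfolding r1_def by auto
    then show "X $$ (r,c) = opm x y $$ (r,c)" using rc' pq
      by (simp add: x_def y_def field_simps)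
  qed (use X in \<open>auto simp: x_def y_def\<close>)
  moreover have "x \<noteq> 0\<^sub>v m" using pq unfolding x_def
    by (metis index_vec index_zero_vec(1))
  moreover have "y \<noteq> 0\<^sub>v n" using pq unfolding y_def
    by (metis divide_eq_0_iff index_vec index_zero_vec(1))
  moreover have "x \<in> carrier_vec m" "y \<in> carrier_vec n" by (auto simp: x_def y_def)
  ultimately show ?thesis by blast
qed

lemma par_refl: "par u u" unfolding par_def by (simp add: mult.commute)
lemma par_sym: "dim_vec u = dim_vec v \<Longrightarrow> par u v \<Longrightarrow> par v u"
  unfolding par_def by (metis mult.commute)

lemma par_iff:
  assumes u: "u \<in> carrier_vec k" and v: "v \<in> carrier_vec k" and nz: "u \<noteq> 0\<^sub>v k"
  shows "par u v \<longleftrightarrow> (\<exists>c. v = c \<cdot>\<^sub>v u)"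
proof
  assume pv: "par u v"
  obtain p0 where p0: "p0 < k" "u $ p0 \<noteq> 0"
  proof (rule ccontr)
    assume "\<not> thesis"
    then have "\<forall>p<k. u $ p = 0" using that by blast
    then have "u = 0\<^sub>v k" using u by (intro eq_vecI) auto
    with nz show False by simp
  qed
  show "\<exists>c. v = c \<cdot>\<^sub>v u"
  proof (intro exI eq_vecI)
    fix q assume "q < dim_vec (v $ p0 / u $ p0 \<cdot>\<^sub>v u)"
    then have q: "q < k" using u by simp
    have "u $ p0 * v $ q = u $ q * v $ p0" using pv p0 q u unfolding par_def by auto
    then show "v $ q = (v $ p0 / u $ p0 \<cdot>\<^sub>v u) $ q" using p0 q u by (simp add: field_simps)
  qed (use u v in auto)
next
  assume "\<exists>c. v = c \<cdot>\<^sub>v u"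
  then obtain c where "v = c \<cdot>\<^sub>v u" by auto
  then show "par u v" unfolding par_def by (simp add: algebra_simps)
qed

lemma par_trans:
  assumes u: "u \<in> carrier_vec k" and v: "v \<in> carrier_vec k" and w: "w \<in> carrier_vec k"
    and nz: "v \<noteq> 0\<^sub>v k" and uv: "par u v" and vw: "par v w"
  shows "par u w"
proof -
  obtain a where a: "u = a \<cdot>\<^sub>v v" using par_iff[OF v u nz] par_sym[OF _ uv] u v by auto
  obtain b where b: "w = b \<cdot>\<^sub>v v" using par_iff[OF v w nz] vw by auto
  show ?thesis unfolding par_def a b by (simp add: algebra_simps)
qed

lemma nonpar_minor:
  assumes u: "u \<in> carrier_vec k" and v: "v \<in> carrier_vec k" and np: "\<not> par u v"
  shows "\<exists>p q. p < k \<and> q < k \<and> u $ p * v $ q - u $ q * v $ p \<noteq> 0"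
  using np u v unfolding par_def by auto

lemma r1_2x2:
  assumes X: "X \<in> carrier_mat m' n'"
    and a: "a \<in> carrier_vec m'" "a' \<in> carrier_vec m'" and b: "b \<in> carrier_vec n'" "b' \<in> carrier_vec n'"
    and npa: "\<not> par a a'" and npb: "\<not> par b b'"
    and e: "\<And>p s. p < m' \<Longrightarrow> s < n' \<Longrightarrow> X $$ (p,s) =
        c1 * a $ p * b $ s + c2 * a $ p * b' $ s + c3 * a' $ p * b $ s + c4 * a' $ p * b' $ s"
    and r: "r1 X"
  shows "c1 * c4 = c2 * c3"
proof -
  obtain p q where pq: "p < m'" "q < m'" "a $ p * a' $ q - a $ q * a' $ p \<noteq> 0"
    using nonpar_minor[OF a npa] by auto
  obtain s t where st: "s < n'" "t < n'" "b $ s * b' $ t - b $ t * b' $ s \<noteq> 0"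
    using nonpar_minor[OF b npb] by auto
  have "X $$ (p,s) * X $$ (q,t) = X $$ (p,t) * X $$ (q,s)"
    using r pq st X unfolding r1_def by auto
  then have "(a $ p * a' $ q - a $ q * a' $ p) * (b $ s * b' $ t - b $ t * b' $ s) * (c1 * c4 - c2 * c3) = 0"
    unfolding e[OF pq(1) st(1)] e[OF pq(2) st(2)] e[OF pq(1) st(2)] e[OF pq(2) st(1)]
    by (simp add: algebra_simps)
  then show ?thesis using pq st by simp
qed

lemma r1_sum2:
  assumes X: "X \<in> carrier_mat m' n'"
    and a: "a \<in> carrier_vec m'" "a' \<in> carrier_vec m'" and b: "b \<in> carrier_vec n'" "b' \<in> carrier_vec n'"
    and e: "\<And>p s. p < m' \<Longrightarrow> s < n' \<Longrightarrow> X $$ (p,s) = a $ p * b $ s + a' $ p * b' $ s"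
    and r: "r1 X"
  shows "par a a' \<or> par b b'"
proof (rule ccontr)
  assume "\<not> ?thesis"
  then have "1 * 1 = (0::complex) * 0"
    by (intro r1_2x2[OF X a b _ _ _ r]) (auto simp: e)
  then show False by simp
qed

locale rkp =
  fixes t :: "complex mat \<Rightarrow> complex mat" and m n m' n' :: nat
  assumes tc: "X \<in> carrier_mat m n \<Longrightarrow> t X \<in> carrier_mat m' n'"
    and tadd: "X \<in> carrier_mat m n \<Longrightarrow> Y \<in> carrier_mat m n \<Longrightarrow> t (X + Y) = t X + t Y"
    and tsm: "X \<in> carrier_mat m n \<Longrightarrow> t (c \<cdot>\<^sub>m X) = c \<cdot>\<^sub>m t X"
    and tinj: "X \<in> carrier_mat m n \<Longrightarrow> t X = 0\<^sub>m m' n' \<Longrightarrow> X = 0\<^sub>m m n"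
    and tr1: "X \<in> carrier_mat m n \<Longrightarrow> r1 (t X) = r1 X"

locale rkr = rkp +
  fixes x y :: "nat \<Rightarrow> nat \<Rightarrow> complex vec"
  assumes xy: "i < m \<Longrightarrow> j < n \<Longrightarrow> t (Em m n i j) = opm (x i j) (y i j)"
    and xc: "i < m \<Longrightarrow> j < n \<Longrightarrow> x i j \<in> carrier_vec m'"
    and yc: "i < m \<Longrightarrow> j < n \<Longrightarrow> y i j \<in> carrier_vec n'"
    and xnz: "i < m \<Longrightarrow> j < n \<Longrightarrow> x i j \<noteq> 0\<^sub>v m'"
    and ynz: "i < m \<Longrightarrow> j < n \<Longrightarrow> y i j \<noteq> 0\<^sub>v n'"
begin

lemma tE2: assumes "i < m" "j < n" "k < m" "l < n"
  shows "t (Em m n i j + Em m n k l) = opm (x i j) (y i j) + opm (x k l) (y k l)"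
  using tadd[of "Em m n i j" "Em m n k l"] xy assms by simp

lemma tE2_index: assumes "i < m" "j < n" "k < m" "l < n" "p < m'" "s < n'"
  shows "t (Em m n i j + Em m n k l) $$ (p,s) = x i j $ p * y i j $ s + x k l $ p * y k l $ s"
  unfolding tE2[OF assms(1-4)] using assms xc[OF assms(1,2)] xc[OF assms(3,4)] yc[OF assms(1,2)] yc[OF assms(3,4)] by simp

lemma K1:
  assumes ij: "i < m" "j < n" and kl: "k < m" "l < n" and same: "i = k \<or> j = l"
  shows "par (x i j) (x k l) \<or> par (y i j) (y k l)"
proof -
  let ?X = "Em m n i j + Em m n k l"
  have Xc: "?X \<in> carrier_mat m n" by simp
  have "r1 ?X"
  proof (cases "i = k")
    case True
    show ?thesis
      by (rule r1_prod_form[of _ "\<lambda>p. if p = i then 1 else 0" "\<lambda>q. (if q = j then 1 else 0) + (if q = l then 1 else 0)"])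
         (use True in auto)
  next
    case False
    with same have "j = l" by simp
    show ?thesis
      by (rule r1_prod_form[of _ "\<lambda>p. (if p = i then 1 else 0) + (if p = k then 1 else 0)" "\<lambda>q. if q = j then 1 else 0"])
         (use \<open>j = l\<close> in auto)
  qed
  then have "r1 (t ?X)" using tr1[OF Xc] by simp
  then show ?thesis
    using r1_sum2[OF tc[OF Xc] xc[OF ij] xc[OF kl] yc[OF ij] yc[OF kl]] tE2_index ij kl by blast
qed

lemma opm_smult: "opm (a \<cdot>\<^sub>v u) (b \<cdot>\<^sub>v v) = (a * b) \<cdot>\<^sub>m opm u v"
  by (rule eq_matI) auto

lemma K2:
  assumes ij: "i < m" "j < n" and kl: "k < m" "l < n" and ne: "(i,j) \<noteq> (k,l)"
  shows "\<not> (par (x i j) (x k l) \<and> par (y i j) (y k l))"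
proof
  assume "par (x i j) (x k l) \<and> par (y i j) (y k l)"
  then obtain a b where a: "x k l = a \<cdot>\<^sub>v x i j" and b: "y k l = b \<cdot>\<^sub>v y i j"
    using par_iff[OF xc[OF ij] xc[OF kl] xnz[OF ij]] par_iff[OF yc[OF ij] yc[OF kl] ynz[OF ij]] by auto
  let ?X = "Em m n k l + (- (a * b)) \<cdot>\<^sub>m Em m n i j"
  have Xc: "?X \<in> carrier_mat m n" by simp
  have "t ?X = opm (x k l) (y k l) + (- (a * b)) \<cdot>\<^sub>m opm (x i j) (y i j)"
    using tadd[of "Em m n k l" "(- (a * b)) \<cdot>\<^sub>m Em m n i j"] tsm[of "Em m n i j"] xy ij kl by simp
  also have "\<dots> = 0\<^sub>m m' n'"
    unfolding a b opm_smult using xc[OF ij] yc[OF ij] by (intro eq_matI) auto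
  finally have "?X = 0\<^sub>m m n" using tinj[OF Xc] by simp
  then have "?X $$ (k,l) = 0" using kl by simp
  then show False using ne kl ij by auto
qed

lemma E2_not_r1:
  assumes ij: "i < m" "j < n" and kl: "k < m" "l < n" and ne: "i \<noteq> k" "j \<noteq> l"
  shows "\<not> r1 (Em m n i j + Em m n k l)"
proof
  assume r: "r1 (Em m n i j + Em m n k l)"
  have "(Em m n i j + Em m n k l) $$ (i,j) * (Em m n i j + Em m n k l) $$ (k,l) =
     (Em m n i j + Em m n k l) $$ (i,l) * (Em m n i j + Em m n k l) $$ (k,j)"
    using r[unfolded r1_def, rule_format, of i k j l] ij kl by simp
  then show False using ij kl ne by simp
qed

lemma K3:
  assumes ij: "i < m" "j < n" and kl: "k < m" "l < n" and ne: "i \<noteq> k" "j \<noteq> l"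
  shows "\<not> par (x i j) (x k l)" "\<not> par (y i j) (y k l)"
proof -
  let ?X = "Em m n i j + Em m n k l"
  have Xc: "?X \<in> carrier_mat m n" by simp
  have tX: "t ?X \<in> carrier_mat m' n'" using tc[OF Xc] .
  show "\<not> par (x i j) (x k l)"
  proof
    assume "par (x i j) (x k l)"
    then obtain a where a: "x k l = a \<cdot>\<^sub>v x i j"
      using par_iff[OF xc[OF ij] xc[OF kl] xnz[OF ij]] by auto
    have "r1 (t ?X)"
      by (rule r1_prod_form[of _ "\<lambda>p. x i j $ p" "\<lambda>s. y i j $ s + a * y k l $ s"])
         (use tX ij kl carrier_vecD[OF xc[OF ij]] carrier_vecD[OF xc[OF kl]] carrier_vecD[OF yc[OF ij]] carrier_vecD[OF yc[OF kl]] in \<open>auto simp: tE2_index a algebra_simps\<close>)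
    then show False using tr1[OF Xc] E2_not_r1[OF ij kl ne] by simp
  qed
  show "\<not> par (y i j) (y k l)"
  proof
    assume "par (y i j) (y k l)"
    then obtain a where a: "y k l = a \<cdot>\<^sub>v y i j"
      using par_iff[OF yc[OF ij] yc[OF kl] ynz[OF ij]] by auto
    have "r1 (t ?X)"
      by (rule r1_prod_form[of _ "\<lambda>p. x i j $ p + a * x k l $ p" "\<lambda>s. y i j $ s"])
         (use tX ij kl carrier_vecD[OF xc[OF ij]] carrier_vecD[OF xc[OF kl]] carrier_vecD[OF yc[OF ij]] carrier_vecD[OF yc[OF kl]] in \<open>auto simp: tE2_index a algebra_simps\<close>)
    then show False using tr1[OF Xc] E2_not_r1[OF ij kl ne] by simp
  qed
qed

end

context rkr begin

lemma xpar_trans: assumes "i < m" "j < n" "k < m" "l < n" "a < m" "b < n"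
  "par (x i j) (x k l)" "par (x k l) (x a b)" shows "par (x i j) (x a b)"
  by (rule par_trans[OF xc[OF assms(1,2)] xc[OF assms(3,4)] xc[OF assms(5,6)] xnz[OF assms(3,4)] assms(7,8)])
lemma ypar_trans: assumes "i < m" "j < n" "k < m" "l < n" "a < m" "b < n"
  "par (y i j) (y k l)" "par (y k l) (y a b)" shows "par (y i j) (y a b)"
  by (rule par_trans[OF yc[OF assms(1,2)] yc[OF assms(3,4)] yc[OF assms(5,6)] ynz[OF assms(3,4)] assms(7,8)])
lemma xpar_sym: assumes "i < m" "j < n" "k < m" "l < n" "par (x i j) (x k l)" shows "par (x k l) (x i j)"
  using par_sym[OF _ assms(5)] carrier_vecD[OF xc[OF assms(1,2)]] carrier_vecD[OF xc[OF assms(3,4)]] by simp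
lemma ypar_sym: assumes "i < m" "j < n" "k < m" "l < n" "par (y i j) (y k l)" shows "par (y k l) (y i j)"
  using par_sym[OF _ assms(5)] carrier_vecD[OF yc[OF assms(1,2)]] carrier_vecD[OF yc[OF assms(3,4)]] by simp

lemma K4:
  assumes "i < m" "k < m" "j < n" "l < n" "i \<noteq> k" "j \<noteq> l"
  shows "par (x i j) (x i l) \<longleftrightarrow> \<not> par (x i j) (x k j)"
proof
  assume H: "par (x i j) (x i l)"
  show "\<not> par (x i j) (x k j)"
  proof
    assume V: "par (x i j) (x k j)"
    have H': "par (x i l) (x i j)" using xpar_sym[OF _ _ _ _ H] assms by simp
    have "par (x i l) (x k j)" using xpar_trans[OF _ _ _ _ _ _ H' V] assms by simp
    then show False using K3(1)[of i l k j] assms by auto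
  qed
next
  assume nV: "\<not> par (x i j) (x k j)"
  show "par (x i j) (x i l)"
  proof (rule ccontr)
    assume nH: "\<not> par (x i j) (x i l)"
    have "par (y i j) (y i l)" using K1[of i j i l] nH assms by auto
    then have Y1: "par (y i l) (y i j)" using ypar_sym assms by simp
    have Y2: "par (y i j) (y k j)" using K1[of i j k j] nV assms by auto
    have "par (y i l) (y k j)" using ypar_trans[OF _ _ _ _ _ _ Y1 Y2] assms by simp
    then show False using K3(2)[of i l k j] assms by auto
  qed
qed

lemma Hstep:
  assumes "i < m" "k < m" "j < n" "l < n" "l' < n" "i \<noteq> k" "j \<noteq> l" "j \<noteq> l'"
  shows "par (x i j) (x i l) = par (x k j) (x k l')"
proof -
  have "par (x i j) (x k j) = par (x k j) (x i j)" using xpar_sym[of i j k j] xpar_sym[of k j i j] assms by blast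
  then show ?thesis using K4[of i k j l] K4[of k i j l'] assms by auto
qed

lemma Hrow:
  assumes "i < m" "i' < m" "j < n" "l < n" "j \<noteq> l"
  shows "par (x i j) (x i l) = par (x i' j) (x i' l)"
  using Hstep[of i i' j l l] assms by (cases "i = i'") auto

lemma Hcol:
  assumes m2: "2 \<le> m" and "i < m" "j < n" "l < n" "l' < n" "j \<noteq> l" "j \<noteq> l'"
  shows "par (x i j) (x i l) = par (x i j) (x i l')"
proof -
  define k where "k = (if i = 0 then 1 else 0::nat)"
  have k: "k < m" "k \<noteq> i" using m2 unfolding k_def by auto
  show ?thesis using Hstep[of i k j l l'] Hstep[of k i j l' l'] assms k by auto
qed

lemma Hall:
  assumes m2: "2 \<le> m" and n2: "2 \<le> n" and i: "i < m" and jl: "j < n" "l < n" "j \<noteq> l"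
  shows "par (x i j) (x i l) = par (x 0 0) (x 0 1)"
proof (cases "j = 0")
  case True
  then have "par (x i j) (x i l) = par (x i 0) (x i 1)" using Hcol[of i 0 l 1] assms by auto
  also have "\<dots> = par (x 0 0) (x 0 1)" using Hrow[of i 0 0 1] assms by auto
  finally show ?thesis .
next
  case False
  have "par (x i j) (x i l) = par (x i j) (x i 0)" using Hcol[of i j l 0] assms False by (cases "l = 0") auto
  also have "\<dots> = par (x i 0) (x i j)" using xpar_sym[of i j i 0] xpar_sym[of i 0 i j] assms by blast
  also have "\<dots> = par (x i 0) (x i 1)" using Hcol[of i 0 j 1] assms False by auto
  also have "\<dots> = par (x 0 0) (x 0 1)" using Hrow[of i 0 0 1] assms by auto
  finally show ?thesis .
qed

lemma allH:
  assumes m2: "2 \<le> m" and n2: "2 \<le> n" and h: "par (x 0 0) (x 0 1)"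
    and "i < m" "j < n" "l < n"
  shows "par (x i j) (x i l)"
  using Hall[of i j l] assms par_refl by (cases "j = l") auto

lemma allVy:
  assumes m2: "2 \<le> m" and n2: "2 \<le> n" and h: "par (x 0 0) (x 0 1)"
    and "i < m" "k < m" "j < n"
  shows "par (y i j) (y k j)"
proof (cases "i = k")
  case True then show ?thesis using par_refl by simp
next
  case False
  define l where "l = (if j = 0 then 1 else 0::nat)"
  have l: "l < n" "l \<noteq> j" using n2 unfolding l_def by auto
  have "\<not> par (x i j) (x k j)" using K4[of i k j l] allH[OF m2 n2 h, of i j l] assms l False by auto
  then show ?thesis using K1[of i j k j] assms by auto
qed

end

context rkr begin

lemma core:
  assumes m2: "2 \<le> m" and n2: "2 \<le> n" and h: "par (x 0 0) (x 0 1)"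
  shows "\<exists>\<alpha> \<beta>. (\<forall>i<m. \<alpha> i \<in> carrier_vec m') \<and> (\<forall>j<n. \<beta> j \<in> carrier_vec n') \<and>
     (\<forall>i<m. \<forall>j<n. t (Em m n i j) = opm (\<alpha> i) (\<beta> j))"
proof -
  define lam where "lam i j = (SOME c. x i j = c \<cdot>\<^sub>v x i 0)" for i j
  define mu where "mu i j = (SOME c. y i j = c \<cdot>\<^sub>v y 0 j)" for i j
  have lam: "x i j = lam i j \<cdot>\<^sub>v x i 0" if "i < m" "j < n" for i j
  proof -
    have "par (x i 0) (x i j)" using allH[OF m2 n2 h, of i 0 j] that n2 by auto
    then have "\<exists>c. x i j = c \<cdot>\<^sub>v x i 0" using par_iff[OF xc xc xnz] that n2 by auto
    then show ?thesis unfolding lam_def by (rule someI_ex)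
  qed
  have mu: "y i j = mu i j \<cdot>\<^sub>v y 0 j" if "i < m" "j < n" for i j
  proof -
    have "par (y 0 j) (y i j)" using allVy[OF m2 n2 h, of 0 i j] that m2 by auto
    then have "\<exists>c. y i j = c \<cdot>\<^sub>v y 0 j" using par_iff[OF yc yc ynz] that m2 by auto
    then show ?thesis unfolding mu_def by (rule someI_ex)
  qed
  define c where "c i j = lam i j * mu i j" for i j
  have a0: "x i 0 \<in> carrier_vec m'" if "i < m" for i using xc that n2 by auto
  have b0: "y 0 j \<in> carrier_vec n'" if "j < n" for j using yc that m2 by auto
  have T: "t (Em m n i j) = c i j \<cdot>\<^sub>m opm (x i 0) (y 0 j)" if "i < m" "j < n" for i j
    using xy[OF that] lam[OF that] mu[OF that] opm_smult c_def by simp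
  have cnz: "c i j \<noteq> 0" if "i < m" "j < n" for i j
  proof
    assume "c i j = 0"
    then have "lam i j = 0 \<or> mu i j = 0" unfolding c_def by simp
    then show False
    proof
      assume "lam i j = 0"
      then have "x i j = 0\<^sub>v m'" using lam[OF that] a0[OF that(1)] by auto
      then show False using xnz[OF that] by simp
    next
      assume "mu i j = 0"
      then have "y i j = 0\<^sub>v n'" using mu[OF that] b0[OF that(2)] by auto
      then show False using ynz[OF that] by simp
    qed
  qed
  have Ti: "t (Em m n i j) $$ (p,s) = c i j * x i 0 $ p * y 0 j $ s" if "i < m" "j < n" "p < m'" "s < n'" for i j p s
    unfolding T[OF that(1,2)] using that a0[OF that(1)] b0[OF that(2)] by simp
  have rel: "c i j * c k l = c i l * c k j" if ij: "i < m" "j < n" and kl: "k < m" "l < n" and ne: "i \<noteq> k" "j \<noteq> l"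
    for i j k l
  proof -
    let ?X = "Em m n i j + Em m n i l + Em m n k j + Em m n k l"
    have Xc: "?X \<in> carrier_mat m n" by simp
    have "r1 ?X"
      by (rule r1_prod_form[of _ "\<lambda>p. (if p = i then 1 else 0) + (if p = k then 1 else 0)" "\<lambda>q. (if q = j then 1 else 0) + (if q = l then 1 else 0)"])
         (use ne in auto)
    then have r: "r1 (t ?X)" using tr1[OF Xc] by simp
    have tX: "t ?X = t (Em m n i j) + t (Em m n i l) + t (Em m n k j) + t (Em m n k l)"
      by (simp add: tadd)
    have e: "t ?X $$ (p,s) = c i j * x i 0 $ p * y 0 j $ s + c i l * x i 0 $ p * y 0 l $ s
       + c k j * x k 0 $ p * y 0 j $ s + c k l * x k 0 $ p * y 0 l $ s" if "p < m'" "s < n'" for p s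
      unfolding tX using that ij kl tc[of "Em m n i j"] tc[of "Em m n i l"] tc[of "Em m n k j"] tc[of "Em m n k l"]
      by (simp add: Ti)
    have npa: "\<not> par (x i 0) (x k 0)"
    proof
      assume "par (x i 0) (x k 0)"
      moreover have "par (x k 0) (x k 1)" using allH[OF m2 n2 h, of k 0 1] kl n2 by auto
      ultimately have "par (x i 0) (x k 1)" using xpar_trans[of i 0 k 0 k 1] ij kl n2 by auto
      then show False using K3(1)[of i 0 k 1] ij kl ne n2 by auto
    qed
    have npb: "\<not> par (y 0 j) (y 0 l)"
    proof
      assume "par (y 0 j) (y 0 l)"
      moreover have "par (y 0 l) (y 1 l)" using allVy[OF m2 n2 h, of 0 1 l] kl m2 by auto
      ultimately have "par (y 0 j) (y 1 l)" using ypar_trans[of 0 j 0 l 1 l] ij kl m2 by auto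
      then show False using K3(2)[of 0 j 1 l] ij kl ne m2 by auto
    qed
    show ?thesis
      by (rule r1_2x2[OF tc[OF Xc] a0[OF ij(1)] a0[OF kl(1)] b0[OF ij(2)] b0[OF kl(2)] npa npb e r])
  qed
  define \<alpha> where "\<alpha> i = c i 0 \<cdot>\<^sub>v x i 0" for i
  define \<beta> where "\<beta> j = (c 0 j / c 0 0) \<cdot>\<^sub>v y 0 j" for j
  have c00: "c 0 0 \<noteq> 0" using cnz m2 n2 by auto
  have cf: "c i j = c i 0 * (c 0 j / c 0 0)" if "i < m" "j < n" for i j
  proof (cases "i = 0 \<or> j = 0")
    case True then show ?thesis using c00 by auto
  next
    case False
    then have "c i j * c 0 0 = c i 0 * c 0 j" using rel[of i j 0 0] that m2 n2 by auto
    then show ?thesis using c00 by (simp add: field_simps)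
  qed
  show ?thesis
  proof (intro exI conjI allI impI)
    show "\<alpha> i \<in> carrier_vec m'" if "i < m" for i using a0[OF that] unfolding \<alpha>_def by simp
    show "\<beta> j \<in> carrier_vec n'" if "j < n" for j using b0[OF that] unfolding \<beta>_def by simp
    show "t (Em m n i j) = opm (\<alpha> i) (\<beta> j)" if "i < m" "j < n" for i j
      unfolding T[OF that] \<alpha>_def \<beta>_def opm_smult using cf[OF that] by simp
  qed
qed

end

lemma r1_transpose: "r1 (X\<^sup>T) = r1 X"
  unfolding r1_def by (auto simp: mult.commute)

lemma Em_r1: "r1 (Em m n i j)"
  by (rule r1_prod_form[of _ "\<lambda>p. if p = i then 1 else 0" "\<lambda>q. if q = j then 1 else 0"]) auto

lemma (in rkp) rkp_transpose: "rkp (\<lambda>X. (t X)\<^sup>T) m n n' m'"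
proof (unfold_locales)
  fix X :: "complex mat" assume X: "X \<in> carrier_mat m n"
  show "(t X)\<^sup>T \<in> carrier_mat n' m'" using tc[OF X] by simp
  show "(t (c \<cdot>\<^sub>m X))\<^sup>T = c \<cdot>\<^sub>m (t X)\<^sup>T" for c using tsm[OF X] by (intro eq_matI) auto
  show "r1 ((t X)\<^sup>T) = r1 X" using tr1[OF X] r1_transpose by simp
  show "X = 0\<^sub>m m n" if "(t X)\<^sup>T = 0\<^sub>m n' m'"
  proof -
    have "t X = ((t X)\<^sup>T)\<^sup>T" by simp
    also have "\<dots> = 0\<^sub>m m' n'" unfolding that by (intro eq_matI) auto
    finally show ?thesis using tinj[OF X] by simp
  qed
  fix Y :: "complex mat" assume Y: "Y \<in> carrier_mat m n"
  show "(t (X + Y))\<^sup>T = (t X)\<^sup>T + (t Y)\<^sup>T"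
    using tadd[OF X Y] transpose_add[OF tc[OF X] tc[OF Y]] by simp
qed

lemma (in rkp) dich:
  assumes m2: "2 \<le> m" and n2: "2 \<le> n"
  shows "(\<exists>\<alpha> \<beta>. (\<forall>i<m. \<alpha> i \<in> carrier_vec m') \<and> (\<forall>j<n. \<beta> j \<in> carrier_vec n') \<and>
           (\<forall>i<m. \<forall>j<n. t (Em m n i j) = opm (\<alpha> i) (\<beta> j)))
       \<or> (\<exists>\<alpha> \<beta>. (\<forall>i<m. \<alpha> i \<in> carrier_vec n') \<and> (\<forall>j<n. \<beta> j \<in> carrier_vec m') \<and>
           (\<forall>i<m. \<forall>j<n. t (Em m n i j) = opm (\<beta> j) (\<alpha> i)))"
proof -
  define Q where "Q i j p = (t (Em m n i j) = opm (fst p) (snd p) \<and> fst p \<in> carrier_vec m' \<and>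
      snd p \<in> carrier_vec n' \<and> fst p \<noteq> 0\<^sub>v m' \<and> snd p \<noteq> 0\<^sub>v n')" for i j p
  have ex: "\<exists>p. Q i j p" if "i < m" "j < n" for i j
  proof -
    have Ec: "Em m n i j \<in> carrier_mat m n" by simp
    have "r1 (t (Em m n i j))" using tr1[OF Ec] Em_r1 by simp
    moreover have "t (Em m n i j) \<noteq> 0\<^sub>m m' n'"
    proof
      assume "t (Em m n i j) = 0\<^sub>m m' n'"
      then have "Em m n i j = 0\<^sub>m m n" using tinj[OF Ec] by simp
      then have "Em m n i j $$ (i,j) = 0" using that by simp
      then show False using that by simp
    qed
    ultimately obtain x y where "t (Em m n i j) = opm x y" "x \<in> carrier_vec m'" "y \<in> carrier_vec n'"
      "x \<noteq> 0\<^sub>v m'" "y \<noteq> 0\<^sub>v n'" using r1_nonzero_opm[OF tc[OF Ec]] by blast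
    then show ?thesis unfolding Q_def by (intro exI[of _ "(x,y)"]) simp
  qed
  define F where "F i j = (SOME p. Q i j p)" for i j
  have F: "Q i j (F i j)" if "i < m" "j < n" for i j
    unfolding F_def using ex[OF that] by (rule someI_ex)
  define x where "x i j = fst (F i j)" for i j
  define y where "y i j = snd (F i j)" for i j
  interpret R: rkr t m n m' n' x y
    by (unfold_locales) (use F in \<open>auto simp: Q_def x_def y_def\<close>)
  show ?thesis
  proof (cases "par (x 0 0) (x 0 1)")
    case True
    then show ?thesis using R.core[OF m2 n2] by blast
  next
    case False
    then have hy: "par (y 0 0) (y 0 1)" using R.K1[of 0 0 0 1] m2 n2 by auto
    interpret T: rkp "\<lambda>X. (t X)\<^sup>T" m n n' m' by (rule rkp_transpose)
    interpret RT: rkr "\<lambda>X. (t X)\<^sup>T" m n n' m' y x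
      by (unfold_locales) (use R.xy R.xc R.yc R.xnz R.ynz in \<open>auto simp: opm_transpose\<close>)
    obtain \<alpha> \<beta> where ab: "\<forall>i<m. \<alpha> i \<in> carrier_vec n'" "\<forall>j<n. \<beta> j \<in> carrier_vec m'"
      "\<forall>i<m. \<forall>j<n. (t (Em m n i j))\<^sup>T = opm (\<alpha> i) (\<beta> j)"
      using RT.core[OF m2 n2 hy] by blast
    have "\<forall>i<m. \<forall>j<n. t (Em m n i j) = opm (\<beta> j) (\<alpha> i)"
    proof (intro allI impI)
      fix i j assume "i < m" "j < n"
      then have "(t (Em m n i j))\<^sup>T\<^sup>T = (opm (\<alpha> i) (\<beta> j))\<^sup>T" using ab(3) by simp
      then show "t (Em m n i j) = opm (\<beta> j) (\<alpha> i)" by (simp add: opm_transpose)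
    qed
    then show ?thesis using ab(1,2) by blast
  qed
qed

lemma sum_reindex_mn: fixes g :: "nat \<Rightarrow> 'a::comm_monoid_add" shows
  "(\<Sum>k<m*n. g k) = (\<Sum>j<n. \<Sum>i<m. g (j*m + i))"
proof -
  have "(\<Sum>k<n*m. g k) = (\<Sum>j<n. sum g {j*m..<j*m+m})" using sum.nat_group[of g m n] by simp
  also have "\<dots> = (\<Sum>j<n. \<Sum>i<m. g (j*m + i))"
  proof (rule sum.cong[OF refl])
    fix j
    have "sum g {0 + j*m..<m + j*m} = sum (\<lambda>i. g (i + j*m)) {0..<m}" by (rule sum.shift_bounds_nat_ivl)
    then show "sum g {j*m..<j*m+m} = (\<Sum>i<m. g (j*m + i))" by (simp add: atLeast0LessThan add.commute)
  qed
  finally show ?thesis by (simp add: mult.commute)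
qed

lemma idx_lt: "i < m \<Longrightarrow> j < n \<Longrightarrow> j * m + i < m * (n::nat)"
proof -
  assume "i < m" "j < n"
  then have "j * m + i < j * m + m" by simp
  also have "\<dots> = (j + 1) * m" by simp
  also have "\<dots> \<le> n * m" using \<open>j < n\<close> by (intro mult_right_mono) auto
  finally show ?thesis by (simp add: mult.commute)
qed

lemma idx_mod: "i < m \<Longrightarrow> (j * m + i) mod m = (i::nat)" by simp
lemma idx_div: "i < m \<Longrightarrow> (j * m + i) div m = (j::nat)" by simp

lemma vecz_carrier[simp]: "vecz m n X \<in> carrier_vec (m*n)" unfolding vecz_def by simp
lemma vecz_dim[simp]: "dim_vec (vecz m n X) = m*n" unfolding vecz_def by simp
lemma foldv_carrier[simp]: "foldv m n a \<in> carrier_mat m n" unfolding foldv_def by simp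
lemma foldv_dims[simp]: "dim_row (foldv m n a) = m" "dim_col (foldv m n a) = n" unfolding foldv_def by simp_all
lemma foldv_index[simp]: "p < m \<Longrightarrow> q < n \<Longrightarrow> foldv m n a $$ (p,q) = a $ (q*m+p)"
  unfolding foldv_def by simp
lemma vecz_index[simp]: "k < m*n \<Longrightarrow> vecz m n X $ k = X $$ (k mod m, k div m)"
  unfolding vecz_def by simp

lemma idx_bounds: "k < m * (n::nat) \<Longrightarrow> k mod m < m \<and> k div m < n"
proof -
  assume k: "k < m * n"
  then have "m > 0" by (cases m) auto
  then show ?thesis using k by (simp add: less_mult_imp_div_less mult.commute)
qed

lemma foldv_vecz: "X \<in> carrier_mat m n \<Longrightarrow> foldv m n (vecz m n X) = X"
  by (intro eq_matI) (auto simp: idx_lt)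

lemma vecz_foldv: "a \<in> carrier_vec (m*n) \<Longrightarrow> vecz m n (foldv m n a) = a"
proof (intro eq_vecI)
  fix k assume a: "a \<in> carrier_vec (m*n)" and "k < dim_vec a"
  then have k: "k < m*n" by simp
  show "vecz m n (foldv m n a) $ k = a $ k" using idx_bounds[OF k] k by (simp add: mult.commute)
qed auto

lemma vecz_add: "X \<in> carrier_mat m n \<Longrightarrow> Y \<in> carrier_mat m n \<Longrightarrow> vecz m n (X + Y) = vecz m n X + vecz m n Y"
  by (intro eq_vecI) (auto dest: idx_bounds)
lemma vecz_smult: "X \<in> carrier_mat m n \<Longrightarrow> vecz m n (c \<cdot>\<^sub>m X) = c \<cdot>\<^sub>v vecz m n X"
  by (intro eq_vecI) (auto dest: idx_bounds)
lemma vecz_zero: "vecz m n (0\<^sub>m m n) = 0\<^sub>v (m*n)"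
  by (intro eq_vecI) (auto dest: idx_bounds)
lemma foldv_zero: "foldv m n (0\<^sub>v (m*n)) = 0\<^sub>m m n"
  by (intro eq_matI) (auto simp: idx_lt)
lemma foldv_add: "a \<in> carrier_vec (m*n) \<Longrightarrow> b \<in> carrier_vec (m*n) \<Longrightarrow> foldv m n (a + b) = foldv m n a + foldv m n b"
  by (intro eq_matI) (auto simp: idx_lt)
lemma foldv_smult: "a \<in> carrier_vec (m*n) \<Longrightarrow> foldv m n (c \<cdot>\<^sub>v a) = c \<cdot>\<^sub>m foldv m n a"
  by (intro eq_matI) (auto simp: idx_lt)

lemma vecz_Em: "i < m \<Longrightarrow> j < n \<Longrightarrow> vecz m n (Em m n i j) = unit_vec (m*n) (j*m+i)"
proof (intro eq_vecI)
  fix k assume ij: "i < m" "j < n" and "k < dim_vec (unit_vec (m*n) (j*m+i))"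
  then have k: "k < m*n" by simp
  have "(k mod m = i \<and> k div m = j) = (k = j*m+i)"
    using ij by (metis div_mult_mod_eq idx_div idx_mod mult.commute)
  then show "vecz m n (Em m n i j) $ k = unit_vec (m*n) (j*m+i) $ k"
    using k idx_bounds[OF k] idx_lt[OF ij] by (auto simp: unit_vec_def)
qed auto

lemma inj_le:
  assumes A: "(A::complex mat) \<in> carrier_mat a b"
    and inj: "\<And>v. v \<in> carrier_vec b \<Longrightarrow> A *\<^sub>v v = 0\<^sub>v a \<Longrightarrow> v = 0\<^sub>v b"
  shows "b \<le> a"
proof (rule ccontr)
  assume "\<not> b \<le> a"
  then have ab: "a < b" by simp
  define A' where "A' = mat b b (\<lambda>(i,j). if i < a then A $$ (i,j) else 0)"
  have A'c: "A' \<in> carrier_mat b b" unfolding A'_def by simp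
  have "A'\<^sup>T *\<^sub>v unit_vec b (b-1) = 0\<^sub>v b"
  proof (intro eq_vecI)
    fix i assume "i < dim_vec (0\<^sub>v b :: complex vec)"
    then have i: "i < b" by simp
    have "(A'\<^sup>T *\<^sub>v unit_vec b (b-1)) $ i = row (A'\<^sup>T) i \<bullet> unit_vec b (b-1)" using i A'c by simp
    also have "\<dots> = row (A'\<^sup>T) i $ (b-1)" using ab by (intro scalar_prod_right_unit) auto
    also have "\<dots> = 0" using i ab A'c unfolding A'_def by auto
    finally show "(A'\<^sup>T *\<^sub>v unit_vec b (b-1)) $ i = 0\<^sub>v b $ i" using i by simp
  qed (use A'c in auto)
  moreover have "unit_vec b (b-1) \<noteq> (0\<^sub>v b :: complex vec)" using ab by simp
  ultimately have "det (A'\<^sup>T) = 0" using det_0_iff_vec_prod_zero_field[of "A'\<^sup>T" b] A'c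
    by (metis transpose_carrier_mat unit_vec_carrier)
  then have "det A' = 0" using det_transpose[OF A'c] by simp
  then obtain v where v: "v \<in> carrier_vec b" "v \<noteq> 0\<^sub>v b" "A' *\<^sub>v v = 0\<^sub>v b"
    using det_0_iff_vec_prod_zero_field[OF A'c] by auto
  have "A *\<^sub>v v = 0\<^sub>v a"
  proof (intro eq_vecI)
    fix i assume "i < dim_vec (0\<^sub>v a :: complex vec)"
    then have i: "i < a" by simp
    have "row A' i = row A i" using i ab A unfolding A'_def by (intro eq_vecI) auto
    then have "(A *\<^sub>v v) $ i = (A' *\<^sub>v v) $ i" using i ab A A'c by simp
    then show "(A *\<^sub>v v) $ i = 0\<^sub>v a $ i" using v(3) i ab by simp
  qed (use A in auto)
  then show False using inj[OF v(1)] v(2) by simp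
qed

lemma mult_opm_left:
  assumes A: "A \<in> carrier_mat a k" and u: "u \<in> carrier_vec k"
  shows "A * opm u v = opm (A *\<^sub>v u) v"
proof (intro eq_matI)
  fix i j assume "i < dim_row (opm (A *\<^sub>v u) v)" "j < dim_col (opm (A *\<^sub>v u) v)"
  then have ij: "i < a" "j < dim_vec v" using A by auto
  have "(A * opm u v) $$ (i,j) = (\<Sum>l\<in>{0..<k}. A $$ (i,l) * (u $ l * v $ j))"
    using ij A u by (simp add: scalar_prod_def)
  also have "\<dots> = (\<Sum>l\<in>{0..<k}. A $$ (i,l) * u $ l) * v $ j"
    by (simp add: sum_distrib_right mult.assoc)
  finally show "(A * opm u v) $$ (i,j) = opm (A *\<^sub>v u) v $$ (i,j)"
    using ij A u by (simp add: scalar_prod_def)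
qed (use A u in auto)

lemma mult_opm_right:
  assumes B: "B \<in> carrier_mat k b" and v: "v \<in> carrier_vec k"
  shows "opm u v * B = opm u (B\<^sup>T *\<^sub>v v)"
proof (intro eq_matI)
  fix i j assume "i < dim_row (opm u (B\<^sup>T *\<^sub>v v))" "j < dim_col (opm u (B\<^sup>T *\<^sub>v v))"
  then have ij: "i < dim_vec u" "j < b" using B by auto
  have "(opm u v * B) $$ (i,j) = (\<Sum>l\<in>{0..<k}. u $ i * v $ l * B $$ (l,j))"
    using ij B v by (simp add: scalar_prod_def)
  also have "\<dots> = u $ i * (\<Sum>l\<in>{0..<k}. B $$ (l,j) * v $ l)"
    by (simp add: sum_distrib_left algebra_simps)
  finally show "(opm u v * B) $$ (i,j) = opm u (B\<^sup>T *\<^sub>v v) $$ (i,j)"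
    using ij B v by (simp add: scalar_prod_def)
qed (use B v in auto)

lemma opm_zero1: "opm (0\<^sub>v a) v = 0\<^sub>m a (dim_vec v)" by (intro eq_matI) auto
lemma opm_zero2: "opm u (0\<^sub>v b) = 0\<^sub>m (dim_vec u) b" by (intro eq_matI) auto

lemma opm_unit_zero1:
  assumes "opm (unit_vec a 0) v = 0\<^sub>m a b" "0 < a" "v \<in> carrier_vec b"
  shows "v = 0\<^sub>v b"
proof (intro eq_vecI)
  fix q assume "q < dim_vec (0\<^sub>v b :: complex vec)"
  then have q: "q < b" by simp
  have "opm (unit_vec a 0) v $$ (0,q) = 0" unfolding assms(1) using assms q by simp
  moreover have "opm (unit_vec a 0) v $$ (0,q) = v $ q" using assms(2) q carrier_vecD[OF assms(3)] by simp
  ultimately show "v $ q = 0\<^sub>v b $ q" using q by simp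
qed (use assms in auto)

lemma opm_unit_zero2:
  assumes "opm u (unit_vec b 0) = 0\<^sub>m a b" "0 < b" "u \<in> carrier_vec a"
  shows "u = 0\<^sub>v a"
proof (intro eq_vecI)
  fix p assume "p < dim_vec (0\<^sub>v a :: complex vec)"
  then have p: "p < a" by simp
  have "opm u (unit_vec b 0) $$ (p,0) = 0" unfolding assms(1) using assms p by simp
  moreover have "opm u (unit_vec b 0) $$ (p,0) = u $ p" using assms(2) p carrier_vecD[OF assms(3)] by simp
  ultimately show "u $ p = 0\<^sub>v a $ p" using p by simp
qed (use assms in auto)

definition tmap :: "nat \<Rightarrow> nat \<Rightarrow> complex mat \<Rightarrow> complex mat \<Rightarrow> complex mat" where
  "tmap m n M X = foldv m n (M *\<^sub>v vecz m n X)"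

lemma tmap_index:
  assumes M: "M \<in> carrier_mat (m*n) (m*n)" and pq: "p < m" "q < n"
  shows "tmap m n M X $$ (p,q) = (\<Sum>j<n. \<Sum>i<m. M $$ (q*m+p, j*m+i) * X $$ (i,j))"
proof -
  have r: "q*m+p < m*n" using idx_lt[OF pq] .
  have "tmap m n M X $$ (p,q) = (M *\<^sub>v vecz m n X) $ (q*m+p)" unfolding tmap_def using pq by simp
  also have "\<dots> = (\<Sum>k\<in>{0..<m*n}. M $$ (q*m+p, k) * vecz m n X $ k)"
    using r M by (simp add: scalar_prod_def)
  also have "\<dots> = (\<Sum>k<m*n. M $$ (q*m+p, k) * X $$ (k mod m, k div m))"
    by (rule sum.cong) auto
  also have "\<dots> = (\<Sum>j<n. \<Sum>i<m. M $$ (q*m+p, j*m+i) * X $$ (i,j))"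
    unfolding sum_reindex_mn by (intro sum.cong refl) simp
  finally show ?thesis .
qed

lemma tmap_Em:
  assumes M: "M \<in> carrier_mat (m*n) (m*n)" and pq: "p < m" "q < n" and ij: "i < m" "j < n"
  shows "tmap m n M (Em m n i j) $$ (p,q) = M $$ (q*m+p, j*m+i)"
proof -
  have "tmap m n M (Em m n i j) $$ (p,q) =
     (\<Sum>j'<n. \<Sum>i'<m. if i' = i then (if j' = j then M $$ (q*m+p, j*m+i) else 0) else 0)"
    unfolding tmap_index[OF M pq] by (intro sum.cong refl) auto
  also have "\<dots> = (\<Sum>j'<n. if j' = j then M $$ (q*m+p, j*m+i) else 0)"
    using ij by (intro sum.cong refl) simp
  also have "\<dots> = M $$ (q*m+p, j*m+i)" using ij by simp
  finally show ?thesis .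
qed

lemma tmap_expand:
  assumes M: "M \<in> carrier_mat (m*n) (m*n)" and pq: "p < m" "q < n"
  shows "tmap m n M X $$ (p,q) = (\<Sum>j<n. \<Sum>i<m. tmap m n M (Em m n i j) $$ (p,q) * X $$ (i,j))"
  unfolding tmap_index[OF M pq, of X] using tmap_Em[OF M pq] by (intro sum.cong refl) simp

lemma tmap_rkp:
  assumes M: "M \<in> carrier_mat (m*n) (m*n)" and Mi: "invertible_mat M"
    and rk: "\<forall>a\<in>carrier_vec (m*n). mrank (foldv m n (M *\<^sub>v a)) = mrank (foldv m n a)"
  shows "rkp (tmap m n M) m n m n"
proof (unfold_locales)
  fix X :: "complex mat" assume X: "X \<in> carrier_mat m n"
  show "tmap m n M X \<in> carrier_mat m n" unfolding tmap_def by simp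
  show "tmap m n M (c \<cdot>\<^sub>m X) = c \<cdot>\<^sub>m tmap m n M X" for c
    unfolding tmap_def vecz_smult[OF X] using M by (simp add: mult_mat_vec foldv_smult)
  have "mrank (tmap m n M X) = mrank X"
    unfolding tmap_def using rk vecz_carrier foldv_vecz[OF X] by metis
  then show "r1 (tmap m n M X) = r1 X"
    using rank_r1[OF X] rank_r1[of "tmap m n M X" m n] unfolding tmap_def by simp
  show "X = 0\<^sub>m m n" if "tmap m n M X = 0\<^sub>m m n"
  proof -
    have "M *\<^sub>v vecz m n X = vecz m n (foldv m n (M *\<^sub>v vecz m n X))"
      using M by (intro vecz_foldv[symmetric]) simp
    also have "\<dots> = 0\<^sub>v (m*n)" using that unfolding tmap_def by (simp add: vecz_zero)
    finally have "vecz m n X = 0\<^sub>v (m*n)" using invertible_inj[OF M Mi] by simp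
    then show ?thesis using foldv_vecz[OF X] foldv_zero by metis
  qed
  fix Y :: "complex mat" assume Y: "Y \<in> carrier_mat m n"
  show "tmap m n M (X + Y) = tmap m n M X + tmap m n M Y"
    unfolding tmap_def vecz_add[OF X Y] using M
    by (simp add: mult_add_distrib_mat_vec[of M "m*n" "m*n"] foldv_add)
qed

lemma invertible_transpose_iff:
  assumes B: "(B::complex mat) \<in> carrier_mat n n"
  shows "invertible_mat (B\<^sup>T) \<longleftrightarrow> invertible_mat B"
proof -
  have d: "det (B\<^sup>T) = det B" using det_transpose[OF B] .
  have Bt: "B\<^sup>T \<in> carrier_mat n n" using B by simp
  show ?thesis
  proof
    assume "invertible_mat (B\<^sup>T)"
    then have "det (B\<^sup>T) \<noteq> 0" by (rule invertible_det_ne0[OF Bt])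
    then show "invertible_mat B" using d det_ne0_invertible[OF B] by simp
  next
    assume "invertible_mat B"
    then have "det B \<noteq> 0" by (rule invertible_det_ne0[OF B])
    then show "invertible_mat (B\<^sup>T)" using d det_ne0_invertible[OF Bt] by simp
  qed
qed

lemma mat_mult_index:
  assumes "A \<in> carrier_mat a b" "C \<in> carrier_mat b c" "p < a" "q < c"
  shows "(A * C) $$ (p,q) = (\<Sum>k<b. A $$ (p,k) * C $$ (k,q))"
  using assms by (simp add: scalar_prod_def atLeast0LessThan)

lemma mat_mult3_index:
  assumes A: "A \<in> carrier_mat a b" and X: "X \<in> carrier_mat b c" and B: "B \<in> carrier_mat c d"
    and pq: "p < a" "q < d"
  shows "(A * X * B) $$ (p,q) = (\<Sum>j<c. \<Sum>i<b. A $$ (p,i) * X $$ (i,j) * B $$ (j,q))"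
proof -
  have AX: "A * X \<in> carrier_mat a c" using A X by simp
  have "(A * X * B) $$ (p,q) = (\<Sum>j<c. (A * X) $$ (p,j) * B $$ (j,q))"
    by (rule mat_mult_index[OF AX B pq])
  also have "\<dots> = (\<Sum>j<c. (\<Sum>i<b. A $$ (p,i) * X $$ (i,j)) * B $$ (j,q))"
    by (intro sum.cong refl) (simp add: mat_mult_index[OF A X pq(1)])
  also have "\<dots> = (\<Sum>j<c. \<Sum>i<b. A $$ (p,i) * X $$ (i,j) * B $$ (j,q))"
    by (simp add: sum_distrib_right)
  finally show ?thesis .
qed

lemma G1:
  assumes M: "M \<in> carrier_mat (m*n) (m*n)" and R: "rkp (tmap m n M) m n m n"
    and m0: "0 < m" and n0: "0 < n"
    and ac: "\<forall>i<m. \<alpha> i \<in> carrier_vec m" and bc: "\<forall>j<n. \<beta> j \<in> carrier_vec n"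
    and ab: "\<forall>i<m. \<forall>j<n. tmap m n M (Em m n i j) = opm (\<alpha> i) (\<beta> j)"
  shows "\<exists>A B. A \<in> carrier_mat m m \<and> invertible_mat A \<and> B \<in> carrier_mat n n \<and> invertible_mat B \<and>
     (\<forall>X\<in>carrier_mat m n. tmap m n M X = A * X * B)"
proof -
  interpret rkp "tmap m n M" m n m n by (rule R)
  define A where "A = mat m m (\<lambda>(p,i). \<alpha> i $ p)"
  define B where "B = mat n n (\<lambda>(j,q). \<beta> j $ q)"
  have A: "A \<in> carrier_mat m m" and B: "B \<in> carrier_mat n n" unfolding A_def B_def by auto
  have form: "tmap m n M X = A * X * B" if X: "X \<in> carrier_mat m n" for X
  proof (rule eq_matI)
    fix p q assume "p < dim_row (A * X * B)" "q < dim_col (A * X * B)"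
    then have pq: "p < m" "q < n" using A B by auto
    have "tmap m n M X $$ (p,q) = (\<Sum>j<n. \<Sum>i<m. \<alpha> i $ p * \<beta> j $ q * X $$ (i,j))"
      unfolding tmap_expand[OF M pq, of X]
    proof (intro sum.cong refl)
      fix j i assume "j \<in> {..<n}" "i \<in> {..<m}"
      then have ij: "j < n" "i < m" by auto
      have "tmap m n M (Em m n i j) = opm (\<alpha> i) (\<beta> j)" using ab ij by blast
      moreover have "dim_vec (\<alpha> i) = m" "dim_vec (\<beta> j) = n" using ac bc ij by auto
      ultimately show "tmap m n M (Em m n i j) $$ (p,q) * X $$ (i,j) = \<alpha> i $ p * \<beta> j $ q * X $$ (i,j)"
        using pq by simp
    qed
    also have "\<dots> = (A * X * B) $$ (p,q)"
      unfolding mat_mult3_index[OF A X B pq]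
    proof (intro sum.cong refl)
      fix j i assume "j \<in> {..<n}" "i \<in> {..<m}"
      then have ij: "j < n" "i < m" by auto
      have "A $$ (p,i) = \<alpha> i $ p" "B $$ (j,q) = \<beta> j $ q" unfolding A_def B_def using ij pq by auto
      then show "\<alpha> i $ p * \<beta> j $ q * X $$ (i,j) = A $$ (p,i) * X $$ (i,j) * B $$ (j,q)"
        by (simp add: mult_ac)
    qed
    finally show "tmap m n M X $$ (p,q) = (A * X * B) $$ (p,q)" .
  qed (use A B X tc[OF X] in auto)
  have Ai: "invertible_mat A"
  proof (rule inj_invertible[OF A])
    fix v assume v: "v \<in> carrier_vec m" and Av: "A *\<^sub>v v = 0\<^sub>v m"
    let ?X = "opm v (unit_vec n 0)"
    have X: "?X \<in> carrier_mat m n" using v by (metis opm_carrier carrier_vecD index_unit_vec(3))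
    have "tmap m n M ?X = A * ?X * B" by (rule form[OF X])
    also have "\<dots> = 0\<^sub>m m n" using mult_opm_left[OF A v] Av opm_zero1 B by simp
    finally have "?X = 0\<^sub>m m n" using tinj[OF X] by simp
    then show "v = 0\<^sub>v m" using opm_unit_zero2[of v n m] n0 v by simp
  qed
  have Bi: "invertible_mat B"
  proof -
    have "invertible_mat (B\<^sup>T)"
    proof (rule inj_invertible)
      show "B\<^sup>T \<in> carrier_mat n n" using B by simp
      fix w assume w: "w \<in> carrier_vec n" and Bw: "B\<^sup>T *\<^sub>v w = 0\<^sub>v n"
      let ?X = "opm (unit_vec m 0) w"
      have X: "?X \<in> carrier_mat m n" using w by (metis opm_carrier carrier_vecD index_unit_vec(3))
      have "tmap m n M ?X = A * ?X * B" by (rule form[OF X])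
      also have "\<dots> = A * (?X * B)" using A X B by simp
      also have "\<dots> = 0\<^sub>m m n" using mult_opm_right[OF B w] Bw opm_zero2 A by simp
      finally have "?X = 0\<^sub>m m n" using tinj[OF X] by simp
      then show "w = 0\<^sub>v n" using opm_unit_zero1[of m w n] m0 w by simp
    qed
    then show ?thesis using invertible_transpose_iff[OF B] by simp
  qed
  show ?thesis using A B Ai Bi form by blast
qed

lemma G2:
  assumes M: "M \<in> carrier_mat (m*n) (m*n)" and R: "rkp (tmap m n M) m n m n"
    and m0: "0 < m" and n0: "0 < n"
    and ac: "\<forall>i<m. \<alpha> i \<in> carrier_vec n" and bc: "\<forall>j<n. \<beta> j \<in> carrier_vec m"
    and ab: "\<forall>i<m. \<forall>j<n. tmap m n M (Em m n i j) = opm (\<beta> j) (\<alpha> i)"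
  shows "m = n \<and> (\<exists>A B. A \<in> carrier_mat m m \<and> invertible_mat A \<and> B \<in> carrier_mat n n \<and> invertible_mat B \<and>
     (\<forall>X\<in>carrier_mat m n. tmap m n M X = A * X\<^sup>T * B))"
proof -
  interpret rkp "tmap m n M" m n m n by (rule R)
  define A where "A = mat m n (\<lambda>(p,j). \<beta> j $ p)"
  define B where "B = mat m n (\<lambda>(i,q). \<alpha> i $ q)"
  have A: "A \<in> carrier_mat m n" and B: "B \<in> carrier_mat m n" unfolding A_def B_def by auto
  have form: "tmap m n M X = A * X\<^sup>T * B" if X: "X \<in> carrier_mat m n" for X
  proof (rule eq_matI)
    have Xt: "X\<^sup>T \<in> carrier_mat n m" using X by simp
    fix p q assume "p < dim_row (A * X\<^sup>T * B)" "q < dim_col (A * X\<^sup>T * B)"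
    then have pq: "p < m" "q < n" using A B by auto
    have "tmap m n M X $$ (p,q) = (\<Sum>j<n. \<Sum>i<m. \<beta> j $ p * \<alpha> i $ q * X $$ (i,j))"
      unfolding tmap_expand[OF M pq, of X]
    proof (intro sum.cong refl)
      fix j i assume "j \<in> {..<n}" "i \<in> {..<m}"
      then have ij: "j < n" "i < m" by auto
      have "tmap m n M (Em m n i j) = opm (\<beta> j) (\<alpha> i)" using ab ij by blast
      moreover have "dim_vec (\<alpha> i) = n" "dim_vec (\<beta> j) = m" using ac bc ij by auto
      ultimately show "tmap m n M (Em m n i j) $$ (p,q) * X $$ (i,j) = \<beta> j $ p * \<alpha> i $ q * X $$ (i,j)"
        using pq by simp
    qed
    also have "\<dots> = (\<Sum>i<m. \<Sum>j<n. \<beta> j $ p * \<alpha> i $ q * X $$ (i,j))" by (rule sum.swap)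
    also have "\<dots> = (A * X\<^sup>T * B) $$ (p,q)"
      unfolding mat_mult3_index[OF A Xt B pq]
    proof (intro sum.cong refl)
      fix i j assume "i \<in> {..<m}" "j \<in> {..<n}"
      then have ij: "j < n" "i < m" by auto
      have "A $$ (p,j) = \<beta> j $ p" "B $$ (i,q) = \<alpha> i $ q" "X\<^sup>T $$ (j,i) = X $$ (i,j)"
        unfolding A_def B_def using ij pq X by auto
      then show "\<beta> j $ p * \<alpha> i $ q * X $$ (i,j) = A $$ (p,j) * X\<^sup>T $$ (j,i) * B $$ (i,q)"
        by (simp add: mult_ac)
    qed
    finally show "tmap m n M X $$ (p,q) = (A * X\<^sup>T * B) $$ (p,q)" .
  qed (use A B X tc[OF X] in auto)
  have Ainj: "v = 0\<^sub>v n" if v: "v \<in> carrier_vec n" and Av: "A *\<^sub>v v = 0\<^sub>v m" for v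
  proof -
    let ?X = "opm (unit_vec m 0) v"
    have X: "?X \<in> carrier_mat m n" using v by (metis opm_carrier carrier_vecD index_unit_vec(3))
    have XT: "?X\<^sup>T = opm v (unit_vec m 0)" by (rule opm_transpose)
    have "tmap m n M ?X = A * ?X\<^sup>T * B" by (rule form[OF X])
    also have "\<dots> = 0\<^sub>m m n" unfolding XT using mult_opm_left[OF A v] Av opm_zero1 B by simp
    finally have "?X = 0\<^sub>m m n" using tinj[OF X] by simp
    then show "v = 0\<^sub>v n" using opm_unit_zero1[of m v n] m0 v by simp
  qed
  have Btinj: "w = 0\<^sub>v m" if w: "w \<in> carrier_vec m" and Bw: "B\<^sup>T *\<^sub>v w = 0\<^sub>v n" for w
  proof -
    let ?X = "opm w (unit_vec n 0)"
    have X: "?X \<in> carrier_mat m n" using w by (metis opm_carrier carrier_vecD index_unit_vec(3))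
    have XT: "?X\<^sup>T = opm (unit_vec n 0) w" by (rule opm_transpose)
    have XTc: "?X\<^sup>T \<in> carrier_mat n m" using X by simp
    have "tmap m n M ?X = A * ?X\<^sup>T * B" by (rule form[OF X])
    also have "\<dots> = A * (?X\<^sup>T * B)" using A XTc B by simp
    also have "\<dots> = 0\<^sub>m m n" unfolding XT using mult_opm_right[OF B w] Bw opm_zero2 A by simp
    finally have "?X = 0\<^sub>m m n" using tinj[OF X] by simp
    then show "w = 0\<^sub>v m" using opm_unit_zero2[of w n m] n0 w by simp
  qed
  have nm: "n \<le> m" by (rule inj_le[OF A Ainj])
  have Bt: "B\<^sup>T \<in> carrier_mat n m" using B by simp
  have mn': "m \<le> n" by (rule inj_le[OF Bt Btinj])
  from nm mn' have mn: "m = n" by simp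
  have A': "A \<in> carrier_mat m m" using A unfolding mn .
  have B': "B \<in> carrier_mat n n" using B unfolding mn .
  have Ai: "invertible_mat A"
  proof (rule inj_invertible[OF A'])
    fix v assume v: "v \<in> carrier_vec m" "A *\<^sub>v v = 0\<^sub>v m"
    have "v = 0\<^sub>v n" using Ainj[of v] v unfolding mn by simp
    then show "v = 0\<^sub>v m" unfolding mn .
  qed
  have Bt': "B\<^sup>T \<in> carrier_mat n n" using B' by simp
  have "invertible_mat (B\<^sup>T)"
  proof (rule inj_invertible[OF Bt'])
    fix v assume v: "v \<in> carrier_vec n" "B\<^sup>T *\<^sub>v v = 0\<^sub>v n"
    have "v = 0\<^sub>v m" using Btinj[of v] v unfolding mn by simp
    then show "v = 0\<^sub>v n" unfolding mn .
  qed
  then have Bi: "invertible_mat B" using invertible_transpose_iff[OF B'] by simp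
  show ?thesis using mn A' B' Ai Bi form by blast
qed

lemma MM:
  assumes M: "M \<in> carrier_mat (m*n) (m*n)" and Mi: "invertible_mat M"
    and rk: "\<forall>a\<in>carrier_vec (m*n). mrank (foldv m n (M *\<^sub>v a)) = mrank (foldv m n a)"
  shows "\<exists>A B. A \<in> carrier_mat m m \<and> invertible_mat A \<and> B \<in> carrier_mat n n \<and> invertible_mat B \<and>
     ((\<forall>X\<in>carrier_mat m n. tmap m n M X = A * X * B) \<or>
      (m = n \<and> (\<forall>X\<in>carrier_mat m n. tmap m n M X = A * X\<^sup>T * B)))"
proof -
  have R: "rkp (tmap m n M) m n m n" by (rule tmap_rkp[OF M Mi rk])
  interpret rkp "tmap m n M" m n m n by (rule R)
  have one: "invertible_mat (1\<^sub>m k :: complex mat)" for k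
    using inv_mat_iff[of "1\<^sub>m k" k] by auto
  show ?thesis
  proof (cases "m = 0 \<or> n = 0")
    case True
    have "\<forall>X\<in>carrier_mat m n. tmap m n M X = 1\<^sub>m m * X * 1\<^sub>m n"
    proof
      fix X :: "complex mat" assume X: "X \<in> carrier_mat m n"
      have c1: "tmap m n M X \<in> carrier_mat m n" by (rule tc[OF X])
      have c2: "1\<^sub>m m * X * 1\<^sub>m n \<in> carrier_mat m n" using X by simp
      show "tmap m n M X = 1\<^sub>m m * X * 1\<^sub>m n" by (rule eq_matI) (use c1 c2 True in auto)
    qed
    then show ?thesis using one[of m] one[of n]
      by (intro exI[of _ "1\<^sub>m m"] exI[of _ "1\<^sub>m n"]) auto
  next
    case False
    then have m0: "0 < m" and n0: "0 < n" by auto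
    have "(\<exists>\<alpha> \<beta>. (\<forall>i<m. \<alpha> i \<in> carrier_vec m) \<and> (\<forall>j<n. \<beta> j \<in> carrier_vec n) \<and>
           (\<forall>i<m. \<forall>j<n. tmap m n M (Em m n i j) = opm (\<alpha> i) (\<beta> j)))
       \<or> (\<exists>\<alpha> \<beta>. (\<forall>i<m. \<alpha> i \<in> carrier_vec n) \<and> (\<forall>j<n. \<beta> j \<in> carrier_vec m) \<and>
           (\<forall>i<m. \<forall>j<n. tmap m n M (Em m n i j) = opm (\<beta> j) (\<alpha> i)))"
    proof (cases "m = 1")
      case True
      let ?\<alpha> = "\<lambda>i. vec 1 (\<lambda>_. 1::complex)"
      let ?\<beta> = "\<lambda>j. vec n (\<lambda>q. tmap m n M (Em m n 0 j) $$ (0,q))"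
      have "\<forall>i<m. \<forall>j<n. tmap m n M (Em m n i j) = opm (?\<alpha> i) (?\<beta> j)"
      proof (intro allI impI)
        fix i j assume ij: "i < m" "j < n"
        then have i0: "i = 0" using True by simp
        have c1: "tmap m n M (Em m n i j) \<in> carrier_mat m n" by (rule tc) simp
        show "tmap m n M (Em m n i j) = opm (?\<alpha> i) (?\<beta> j)"
          by (rule eq_matI) (use c1 True i0 in auto)
      qed
      then show ?thesis using True by (intro disjI1 exI[of _ ?\<alpha>] exI[of _ ?\<beta>]) auto
    next
      case m1: False
      show ?thesis
      proof (cases "n = 1")
        case True
        let ?\<alpha> = "\<lambda>i. vec m (\<lambda>p. tmap m n M (Em m n i 0) $$ (p,0))"
        let ?\<beta> = "\<lambda>j. vec 1 (\<lambda>_. 1::complex)"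
        have "\<forall>i<m. \<forall>j<n. tmap m n M (Em m n i j) = opm (?\<alpha> i) (?\<beta> j)"
        proof (intro allI impI)
          fix i j assume ij: "i < m" "j < n"
          then have j0: "j = 0" using True by simp
          have c1: "tmap m n M (Em m n i j) \<in> carrier_mat m n" by (rule tc) simp
          show "tmap m n M (Em m n i j) = opm (?\<alpha> i) (?\<beta> j)"
            by (rule eq_matI) (use c1 True j0 in auto)
        qed
        then show ?thesis using True by (intro disjI1 exI[of _ ?\<alpha>] exI[of _ ?\<beta>]) auto
      next
        case False
        have "2 \<le> m" "2 \<le> n" using False m1 m0 n0 by auto
        then show ?thesis by (rule dich)
      qed
    qed
    then show ?thesis
    proof
      assume "\<exists>\<alpha> \<beta>. (\<forall>i<m. \<alpha> i \<in> carrier_vec m) \<and> (\<forall>j<n. \<beta> j \<in> carrier_vec n) \<and>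
           (\<forall>i<m. \<forall>j<n. tmap m n M (Em m n i j) = opm (\<alpha> i) (\<beta> j))"
      then obtain \<alpha> \<beta> where "(\<forall>i<m. \<alpha> i \<in> carrier_vec m)" "(\<forall>j<n. \<beta> j \<in> carrier_vec n)"
           "(\<forall>i<m. \<forall>j<n. tmap m n M (Em m n i j) = opm (\<alpha> i) (\<beta> j))" by blast
      from G1[OF M R m0 n0 this] show ?thesis by blast
    next
      assume "\<exists>\<alpha> \<beta>. (\<forall>i<m. \<alpha> i \<in> carrier_vec n) \<and> (\<forall>j<n. \<beta> j \<in> carrier_vec m) \<and>
           (\<forall>i<m. \<forall>j<n. tmap m n M (Em m n i j) = opm (\<beta> j) (\<alpha> i))"
      then obtain \<alpha> \<beta> where "(\<forall>i<m. \<alpha> i \<in> carrier_vec n)" "(\<forall>j<n. \<beta> j \<in> carrier_vec m)"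
           "(\<forall>i<m. \<forall>j<n. tmap m n M (Em m n i j) = opm (\<beta> j) (\<alpha> i))" by blast
      from G2[OF M R m0 n0 this] show ?thesis by blast
    qed
  qed
qed

lemma foldr_lc:
  assumes "\<forall>i\<in>set xs. G i \<in> carrier_mat m n"
  shows "foldr (\<lambda>i acc. c i \<cdot>\<^sub>m G i + acc) xs (0\<^sub>m m n) \<in> carrier_mat m n \<and>
    (\<forall>p<m. \<forall>q<n. foldr (\<lambda>i acc. c i \<cdot>\<^sub>m G i + acc) xs (0\<^sub>m m n) $$ (p,q) = sum_list (map (\<lambda>i. c i * G i $$ (p,q)) xs))"
  using assms
proof (induction xs)
  case Nil then show ?case by simp
next
  case (Cons a xs)
  then have Ga: "G a \<in> carrier_mat m n" by simp
  from Cons have IH: "foldr (\<lambda>i acc. c i \<cdot>\<^sub>m G i + acc) xs (0\<^sub>m m n) \<in> carrier_mat m n"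
    "\<forall>p<m. \<forall>q<n. foldr (\<lambda>i acc. c i \<cdot>\<^sub>m G i + acc) xs (0\<^sub>m m n) $$ (p,q) = sum_list (map (\<lambda>i. c i * G i $$ (p,q)) xs)"
    by auto
  show ?case using IH Ga by auto
qed

lemma lc_carrier:
  assumes "\<forall>G\<in>set Gs. G \<in> carrier_mat m n"
  shows "lincomb_mats m n c Gs \<in> carrier_mat m n"
  unfolding lincomb_mats_def using foldr_lc[of "[0..<length Gs]" "\<lambda>i. Gs ! i" m n c] assms by auto

lemma lc_index:
  assumes "\<forall>G\<in>set Gs. G \<in> carrier_mat m n" and pq: "p < m" "q < n"
  shows "lincomb_mats m n c Gs $$ (p,q) = (\<Sum>i<length Gs. c i * (Gs ! i) $$ (p,q))"
proof -
  have "lincomb_mats m n c Gs $$ (p,q) = sum_list (map (\<lambda>i. c i * (Gs ! i) $$ (p,q)) [0..<length Gs])"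
    unfolding lincomb_mats_def using foldr_lc[of "[0..<length Gs]" "\<lambda>i. Gs ! i" m n c] assms by auto
  also have "\<dots> = (\<Sum>i<length Gs. c i * (Gs ! i) $$ (p,q))"
    by (simp add: sum_set_upt_conv_sum_list_nat[symmetric] atLeast0LessThan)
  finally show ?thesis .
qed

lemma lc_dims:
  assumes "\<forall>G\<in>set Gs. G \<in> carrier_mat m n"
  shows "dim_row (lincomb_mats m n c Gs) = m" "dim_col (lincomb_mats m n c Gs) = n"
  using lc_carrier[OF assms] by auto

lemma lc_cong:
  assumes Gs: "\<forall>G\<in>set Gs. G \<in> carrier_mat m n" and cd: "\<And>i. i < length Gs \<Longrightarrow> c i = d i"
  shows "lincomb_mats m n c Gs = lincomb_mats m n d Gs"
proof (rule eq_matI)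
  fix i j assume "i < dim_row (lincomb_mats m n d Gs)" "j < dim_col (lincomb_mats m n d Gs)"
  then have ij: "i < m" "j < n" using lc_dims[OF Gs] by auto
  show "lincomb_mats m n c Gs $$ (i,j) = lincomb_mats m n d Gs $$ (i,j)"
    unfolding lc_index[OF Gs ij] using cd by (intro sum.cong refl) auto
qed (use lc_dims[OF Gs] in auto)

lemma lc_mult:
  assumes Gs: "\<forall>G\<in>set Gs. G \<in> carrier_mat m n" and A: "A \<in> carrier_mat m' m" and B: "B \<in> carrier_mat n n'"
  shows "A * lincomb_mats m n c Gs * B = lincomb_mats m' n' c (map (\<lambda>G. A * G * B) Gs)"
proof -
  have Gs': "\<forall>G\<in>set (map (\<lambda>G. A * G * B) Gs). G \<in> carrier_mat m' n'" using Gs A B by auto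
  have L: "lincomb_mats m n c Gs \<in> carrier_mat m n" by (rule lc_carrier[OF Gs])
  show ?thesis
  proof (rule eq_matI)
    fix p q assume "p < dim_row (lincomb_mats m' n' c (map (\<lambda>G. A * G * B) Gs))"
      "q < dim_col (lincomb_mats m' n' c (map (\<lambda>G. A * G * B) Gs))"
    then have pq: "p < m'" "q < n'" using lc_dims[OF Gs'] by auto
    have "(A * lincomb_mats m n c Gs * B) $$ (p,q) =
       (\<Sum>j<n. \<Sum>i<m. A $$ (p,i) * (\<Sum>k<length Gs. c k * (Gs ! k) $$ (i,j)) * B $$ (j,q))"
      unfolding mat_mult3_index[OF A L B pq] by (intro sum.cong refl) (simp add: lc_index[OF Gs])
    also have "\<dots> = (\<Sum>j<n. \<Sum>i<m. \<Sum>k<length Gs. c k * (A $$ (p,i) * (Gs ! k) $$ (i,j) * B $$ (j,q)))"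
      by (simp add: sum_distrib_left sum_distrib_right mult_ac)
    also have "\<dots> = (\<Sum>j<n. \<Sum>k<length Gs. \<Sum>i<m. c k * (A $$ (p,i) * (Gs ! k) $$ (i,j) * B $$ (j,q)))"
      by (rule sum.cong[OF refl], rule sum.swap)
    also have "\<dots> = (\<Sum>k<length Gs. \<Sum>j<n. \<Sum>i<m. c k * (A $$ (p,i) * (Gs ! k) $$ (i,j) * B $$ (j,q)))"
      by (rule sum.swap)
    also have "\<dots> = (\<Sum>k<length Gs. c k * (A * (Gs ! k) * B) $$ (p,q))"
    proof (intro sum.cong refl)
      fix k assume "k \<in> {..<length Gs}"
      then have Gk: "Gs ! k \<in> carrier_mat m n" using Gs by auto
      show "(\<Sum>j<n. \<Sum>i<m. c k * (A $$ (p,i) * (Gs ! k) $$ (i,j) * B $$ (j,q))) = c k * (A * (Gs ! k) * B) $$ (p,q)"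
        unfolding mat_mult3_index[OF A Gk B pq] by (simp add: sum_distrib_left)
    qed
    also have "\<dots> = lincomb_mats m' n' c (map (\<lambda>G. A * G * B) Gs) $$ (p,q)"
      unfolding lc_index[OF Gs' pq] by simp
    finally show "(A * lincomb_mats m n c Gs * B) $$ (p,q) = lincomb_mats m' n' c (map (\<lambda>G. A * G * B) Gs) $$ (p,q)" .
  qed (use A B L lc_dims[OF Gs'] in auto)
qed

lemma lc_transpose:
  assumes Gs: "\<forall>G\<in>set Gs. G \<in> carrier_mat m n"
  shows "(lincomb_mats m n c Gs)\<^sup>T = lincomb_mats n m c (map transpose_mat Gs)"
proof -
  have Gs': "\<forall>G\<in>set (map transpose_mat Gs). G \<in> carrier_mat n m" using Gs by auto
  show ?thesis
  proof (rule eq_matI)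
    fix i j assume "i < dim_row (lincomb_mats n m c (map transpose_mat Gs))" "j < dim_col (lincomb_mats n m c (map transpose_mat Gs))"
    then have ij: "i < n" "j < m" using lc_dims[OF Gs'] by auto
    show "(lincomb_mats m n c Gs)\<^sup>T $$ (i,j) = lincomb_mats n m c (map transpose_mat Gs) $$ (i,j)"
      using ij lc_dims[OF Gs] unfolding lc_index[OF Gs' ij]
    proof (simp add: lc_index[OF Gs], intro sum.cong refl)
      fix k assume "k \<in> {..<length Gs}"
      then have "Gs ! k \<in> carrier_mat m n" using Gs by auto
      then show "c k * Gs ! k $$ (j, i) = c k * (Gs ! k)\<^sup>T $$ (i, j)" using ij by simp
    qed
  qed (use lc_dims[OF Gs] lc_dims[OF Gs'] in auto)
qed

lemma mat_inv_props:
  assumes A: "(A::complex mat) \<in> carrier_mat n n" and Ai: "invertible_mat A"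
  shows "mat_inv A \<in> carrier_mat n n" "A * mat_inv A = 1\<^sub>m n" "mat_inv A * A = 1\<^sub>m n"
proof -
  obtain B where B: "B \<in> carrier_mat n n" "A * B = 1\<^sub>m n" "B * A = 1\<^sub>m n" using Ai inv_mat_iff[OF A] by auto
  have U: "A \<in> Units (ring_mat TYPE(complex) n ())"
    unfolding Units_def using A B by (auto simp: ring_mat_simps)
  obtain C where C: "mat_inverse A = Some C"
    by (cases "mat_inverse A") (use mat_inverse(1)[OF A, of "()"] U in auto)
  from mat_inverse(2)[OF A C] C
  show "mat_inv A \<in> carrier_mat n n" "A * mat_inv A = 1\<^sub>m n" "mat_inv A * A = 1\<^sub>m n"
    unfolding mat_inv_def by auto
qed

lemma mat_inv_invertible:
  assumes A: "(A::complex mat) \<in> carrier_mat n n" and Ai: "invertible_mat A"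
  shows "invertible_mat (mat_inv A)"
  using mat_inv_props[OF A Ai] inv_mat_iff[of "mat_inv A" n] A by auto

lemma U_carrier: "U_mat m n Gs \<in> carrier_mat (m*n) (length Gs)"
  unfolding U_mat_def using mat_of_cols_carrier(1)[of "m*n" "map (vecz m n) Gs"] by simp

lemma U_index: "i < m*n \<Longrightarrow> k < length Gs \<Longrightarrow> U_mat m n Gs $$ (i,k) = (Gs ! k) $$ (i mod m, i div m)"
  unfolding U_mat_def by (simp add: mat_of_cols_index)

lemma U_mult:
  assumes Gs: "\<forall>G\<in>set Gs. G \<in> carrier_mat m n" and c: "c \<in> carrier_vec (length Gs)"
  shows "U_mat m n Gs *\<^sub>v c = vecz m n (lincomb_mats m n (\<lambda>i. c $ i) Gs)"
proof (rule eq_vecI)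
  fix i assume "i < dim_vec (vecz m n (lincomb_mats m n (\<lambda>i. c $ i) Gs))"
  then have i: "i < m*n" by simp
  have b: "i mod m < m" "i div m < n" using idx_bounds[OF i] by auto
  have "(U_mat m n Gs *\<^sub>v c) $ i = (\<Sum>k\<in>{0..<length Gs}. U_mat m n Gs $$ (i,k) * c $ k)"
    using i U_carrier[of m n Gs] c by (simp add: scalar_prod_def)
  also have "\<dots> = (\<Sum>k<length Gs. c $ k * (Gs ! k) $$ (i mod m, i div m))"
    by (simp add: atLeast0LessThan U_index[OF i] mult.commute)
  also have "\<dots> = vecz m n (lincomb_mats m n (\<lambda>i. c $ i) Gs) $ i"
    using i lc_index[OF Gs b] by simp
  finally show "(U_mat m n Gs *\<^sub>v c) $ i = vecz m n (lincomb_mats m n (\<lambda>i. c $ i) Gs) $ i" .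
qed (use U_carrier[of m n Gs] in simp)

lemma U_unit:
  assumes k: "k < length Gs"
  shows "U_mat m n Gs *\<^sub>v unit_vec (length Gs) k = vecz m n (Gs ! k)"
proof (rule eq_vecI)
  fix i assume "i < dim_vec (vecz m n (Gs ! k))"
  then have i: "i < m*n" by simp
  have "(U_mat m n Gs *\<^sub>v unit_vec (length Gs) k) $ i = row (U_mat m n Gs) i \<bullet> unit_vec (length Gs) k"
    using i U_carrier[of m n Gs] by simp
  also have "\<dots> = row (U_mat m n Gs) i $ k" using k by (intro scalar_prod_right_unit) auto
  also have "\<dots> = vecz m n (Gs ! k) $ i" using i k U_carrier[of m n Gs] by (simp add: U_index)
  finally show "(U_mat m n Gs *\<^sub>v unit_vec (length Gs) k) $ i = vecz m n (Gs ! k) $ i" .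
qed (use U_carrier[of m n Gs] in simp)

lemma lc_zero:
  assumes Gs: "\<forall>G\<in>set Gs. G \<in> carrier_mat m n"
  shows "lincomb_mats m n (\<lambda>i. 0) Gs = 0\<^sub>m m n"
  by (rule eq_matI) (use lc_dims[OF Gs] in \<open>auto simp: lc_index[OF Gs]\<close>)

lemma basis_inj:
  assumes B: "basis_mats m n Gs" and c: "c \<in> carrier_vec (length Gs)"
    and Uc: "U_mat m n Gs *\<^sub>v c = 0\<^sub>v (m*n)"
  shows "c = 0\<^sub>v (length Gs)"
proof -
  have Gs: "\<forall>G\<in>set Gs. G \<in> carrier_mat m n" using B unfolding basis_mats_def by auto
  have uniq: "\<exists>!c. c \<in> carrier_vec (length Gs) \<and> 0\<^sub>m m n = lincomb_mats m n (\<lambda>i. c $ i) Gs"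
    using B unfolding basis_mats_def by auto
  have "lincomb_mats m n (\<lambda>i. c $ i) Gs = foldv m n (vecz m n (lincomb_mats m n (\<lambda>i. c $ i) Gs))"
    using foldv_vecz[OF lc_carrier[OF Gs]] by simp
  also have "\<dots> = 0\<^sub>m m n"
  proof -
    have "vecz m n (lincomb_mats m n (\<lambda>i. c $ i) Gs) = 0\<^sub>v (m*n)" using U_mult[OF Gs c] Uc by simp
    then show ?thesis by (simp add: foldv_zero)
  qed
  finally have c0: "0\<^sub>m m n = lincomb_mats m n (\<lambda>i. c $ i) Gs" by simp
  have z0: "0\<^sub>m m n = lincomb_mats m n (\<lambda>i. (0\<^sub>v (length Gs)) $ i) Gs"
  proof -
    have "lincomb_mats m n (\<lambda>i. (0\<^sub>v (length Gs)) $ i) Gs = lincomb_mats m n (\<lambda>i. 0) Gs"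
      by (rule lc_cong[OF Gs]) simp
    then show ?thesis using lc_zero[OF Gs] by simp
  qed
  show ?thesis using uniq c c0 z0 by auto
qed

lemma comp_facts:
  assumes S: "state_fmt r m n Psi" and C: "complementary m n Psi C"
  shows "r \<le> m*n" "length (Psi @ C) = m*n" "U_mat m n (Psi @ C) \<in> carrier_mat (m*n) (m*n)"
    "invertible_mat (U_mat m n (Psi @ C))" "\<forall>G\<in>set (Psi @ C). G \<in> carrier_mat m n"
proof -
  have B: "basis_mats m n (Psi @ C)" using C unfolding complementary_def by simp
  show Gs: "\<forall>G\<in>set (Psi @ C). G \<in> carrier_mat m n" using B unfolding basis_mats_def by simp
  have L: "length (Psi @ C) = r + (m*n - r)" using S C unfolding state_fmt_def complementary_def by simp
  have "length (Psi @ C) \<le> m*n"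
    using inj_le[OF U_carrier[of m n "Psi @ C"]] basis_inj[OF B] by blast
  then show r: "r \<le> m*n" using L by linarith
  then show L': "length (Psi @ C) = m*n" using L by simp
  show Uc: "U_mat m n (Psi @ C) \<in> carrier_mat (m*n) (m*n)" using U_carrier[of m n "Psi @ C"] L' by simp
  show "invertible_mat (U_mat m n (Psi @ C))"
    by (rule inj_invertible[OF Uc]) (use basis_inj[OF B] L' in auto)
qed

lemma inv_sandwich:
  assumes A: "A \<in> carrier_mat m m" and Ai: "Ai \<in> carrier_mat m m" and AA: "Ai * A = 1\<^sub>m m"
    and B: "B \<in> carrier_mat n n" and Bi: "Bi \<in> carrier_mat n n" and BB: "B * Bi = 1\<^sub>m n"
    and X: "(X::complex mat) \<in> carrier_mat m n"
  shows "Ai * (A * X * B) * Bi = X"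
proof -
  have AX: "A * X \<in> carrier_mat m n" using A X by simp
  have "Ai * (A * X * B) = Ai * (A * X) * B" using assoc_mult_mat[OF Ai AX B] by simp
  also have "Ai * (A * X) = Ai * A * X" using assoc_mult_mat[OF Ai A X] by simp
  also have "\<dots> = X" using AA X by simp
  finally have "Ai * (A * X * B) = X * B" .
  then have "Ai * (A * X * B) * Bi = X * B * Bi" by simp
  also have "\<dots> = X * (B * Bi)" using assoc_mult_mat[OF X B Bi] .
  also have "\<dots> = X" using BB X by simp
  finally show ?thesis .
qed

lemma invertible_inverse:
  assumes A: "(A::complex mat) \<in> carrier_mat n n" and Ai: "Ai \<in> carrier_mat n n"
    and "A * Ai = 1\<^sub>m n" "Ai * A = 1\<^sub>m n"
  shows "invertible_mat Ai"
  using assms inv_mat_iff[OF Ai] by auto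

lemma transpose_invertible:
  assumes A: "(A::complex mat) \<in> carrier_mat n n" and "invertible_mat A"
  shows "invertible_mat (A\<^sup>T)"
  using invertible_transpose_iff[OF A] assms by simp

lemma slocc_from_AB:
  assumes S: "state_fmt r m n Psi" and S': "state_fmt r m n Psi'"
    and A: "A \<in> carrier_mat m m" "invertible_mat A" and B: "B \<in> carrier_mat n n" "invertible_mat B"
    and P: "P \<in> carrier_mat r r" "invertible_mat P"
    and rel: "\<forall>k<r. A * (Psi' ! k) * B = lincomb_mats m n (\<lambda>l. P $$ (l,k)) Psi"
  shows "slocc_equiv m n Psi' Psi"
proof -
  obtain Ai where Ai: "Ai \<in> carrier_mat m m" "A * Ai = 1\<^sub>m m" "Ai * A = 1\<^sub>m m" using A inv_mat_iff by blast
  obtain Bi where Bi: "Bi \<in> carrier_mat n n" "B * Bi = 1\<^sub>m n" "Bi * B = 1\<^sub>m n" using B inv_mat_iff by blast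
  have Ps: "\<forall>G\<in>set Psi. G \<in> carrier_mat m n" and lr: "length Psi = r" using S unfolding state_fmt_def by auto
  have Ps': "\<forall>G\<in>set Psi'. G \<in> carrier_mat m n" and lr': "length Psi' = r" using S' unfolding state_fmt_def by auto
  have len: "length Psi' = length Psi" using lr lr' by simp
  show ?thesis unfolding slocc_equiv_def
  proof (rule conjI, rule len, rule exI[of _ "P\<^sup>T"], rule exI[of _ Ai], rule exI[of _ "Bi\<^sup>T"], intro conjI allI impI)
    show "P\<^sup>T \<in> carrier_mat (length Psi) (length Psi)" using P lr by simp
    show "invertible_mat (P\<^sup>T)" using transpose_invertible P by simp
    show "Ai \<in> carrier_mat m m" by (rule Ai(1))
    show "invertible_mat Ai" by (rule invertible_inverse[OF A(1) Ai])
    show "Bi\<^sup>T \<in> carrier_mat n n" using Bi by simp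
    show "invertible_mat (Bi\<^sup>T)" using transpose_invertible invertible_inverse[OF B(1) Bi] Bi(1) by blast
    fix k assume k: "k < length Psi"
    then have k': "k < r" using lr by simp
    have Gk: "Psi' ! k \<in> carrier_mat m n" using Ps' k' lr' by auto
    have "Psi' ! k = Ai * (A * (Psi' ! k) * B) * Bi"
      using inv_sandwich[OF A(1) Ai(1) Ai(3) B(1) Bi(1) Bi(2) Gk] by simp
    also have "\<dots> = Ai * lincomb_mats m n (\<lambda>l. P $$ (l,k)) Psi * Bi" using rel k' by simp
    also have "\<dots> = lincomb_mats m n (\<lambda>l. P $$ (l,k)) (map (\<lambda>G. Ai * G * Bi) Psi)"
      by (rule lc_mult[OF Ps Ai(1) Bi(1)])
    also have "\<dots> = lincomb_mats m n (\<lambda>l. P\<^sup>T $$ (k,l)) (map (\<lambda>G. Ai * G * Bi) Psi)"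
      by (rule lc_cong) (use Ps Ai(1) Bi(1) P k' lr in auto)
    also have "\<dots> = lincomb_mats m n (\<lambda>l. P\<^sup>T $$ (k,l)) (map (\<lambda>G. Ai * G * Bi\<^sup>T\<^sup>T) Psi)"
      by simp
    finally show "Psi' ! k = lincomb_mats m n (\<lambda>l. P\<^sup>T $$ (k,l)) (map (\<lambda>G. Ai * G * Bi\<^sup>T\<^sup>T) Psi)" .
  qed
qed

lemma slocc_from_ABT:
  assumes S: "state_fmt r m m Psi" and S': "state_fmt r m m Psi'"
    and A: "A \<in> carrier_mat m m" "invertible_mat A" and B: "B \<in> carrier_mat m m" "invertible_mat B"
    and P: "P \<in> carrier_mat r r" "invertible_mat P"
    and rel: "\<forall>k<r. A * (Psi' ! k)\<^sup>T * B = lincomb_mats m m (\<lambda>l. P $$ (l,k)) Psi"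
  shows "slocc_equiv m m Psi' (map transpose_mat Psi)"
proof -
  obtain Ai where Ai: "Ai \<in> carrier_mat m m" "A * Ai = 1\<^sub>m m" "Ai * A = 1\<^sub>m m" using A inv_mat_iff by blast
  obtain Bi where Bi: "Bi \<in> carrier_mat m m" "B * Bi = 1\<^sub>m m" "Bi * B = 1\<^sub>m m" using B inv_mat_iff by blast
  have Ps: "\<forall>G\<in>set Psi. G \<in> carrier_mat m m" and lr: "length Psi = r" using S unfolding state_fmt_def by auto
  have Ps': "\<forall>G\<in>set Psi'. G \<in> carrier_mat m m" and lr': "length Psi' = r" using S' unfolding state_fmt_def by auto
  have PsT: "\<forall>G\<in>set (map transpose_mat Psi). G \<in> carrier_mat m m" using Ps by auto
  have len: "length Psi' = length (map transpose_mat Psi)" using lr lr' by simp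
  show ?thesis unfolding slocc_equiv_def
  proof (rule conjI, rule len, rule exI[of _ "P\<^sup>T"], rule exI[of _ "Bi\<^sup>T"], rule exI[of _ Ai], intro conjI allI impI)
    show "P\<^sup>T \<in> carrier_mat (length (map transpose_mat Psi)) (length (map transpose_mat Psi))" using P lr by simp
    show "invertible_mat (P\<^sup>T)" using transpose_invertible P by simp
    show "Ai \<in> carrier_mat m m" by (rule Ai(1))
    show "invertible_mat Ai" by (rule invertible_inverse[OF A(1) Ai])
    show "Bi\<^sup>T \<in> carrier_mat m m" using Bi by simp
    show "invertible_mat (Bi\<^sup>T)" using transpose_invertible invertible_inverse[OF B(1) Bi] Bi(1) by blast
    fix k assume k: "k < length (map transpose_mat Psi)"
    then have k': "k < r" using lr by simp
    have Gk: "(Psi' ! k)\<^sup>T \<in> carrier_mat m m" using Ps' k' lr' by auto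
    have L: "lincomb_mats m m (\<lambda>l. P $$ (l,k)) Psi \<in> carrier_mat m m" by (rule lc_carrier[OF Ps])
    have "(Psi' ! k)\<^sup>T = Ai * (A * (Psi' ! k)\<^sup>T * B) * Bi"
      using inv_sandwich[OF A(1) Ai(1) Ai(3) B(1) Bi(1) Bi(2) Gk] by simp
    also have "\<dots> = Ai * lincomb_mats m m (\<lambda>l. P $$ (l,k)) Psi * Bi" using rel k' by simp
    finally have e: "(Psi' ! k)\<^sup>T = Ai * lincomb_mats m m (\<lambda>l. P $$ (l,k)) Psi * Bi" .
    have "Psi' ! k = (Ai * lincomb_mats m m (\<lambda>l. P $$ (l,k)) Psi * Bi)\<^sup>T"
      using arg_cong[OF e, of transpose_mat] by simp
    also have "\<dots> = Bi\<^sup>T * (lincomb_mats m m (\<lambda>l. P $$ (l,k)) Psi)\<^sup>T * Ai\<^sup>T"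
      using Ai(1) Bi(1) L by (simp add: transpose_mult[of _ m m _ m] assoc_mult_mat[of _ m m _ m])
    also have "\<dots> = Bi\<^sup>T * lincomb_mats m m (\<lambda>l. P $$ (l,k)) (map transpose_mat Psi) * Ai\<^sup>T"
      using lc_transpose[OF Ps] by simp
    also have "\<dots> = lincomb_mats m m (\<lambda>l. P $$ (l,k)) (map (\<lambda>G. Bi\<^sup>T * G * Ai\<^sup>T) (map transpose_mat Psi))"
      by (rule lc_mult[OF PsT]) (use Ai(1) Bi(1) in auto)
    also have "\<dots> = lincomb_mats m m (\<lambda>l. P\<^sup>T $$ (k,l)) (map (\<lambda>G. Bi\<^sup>T * G * Ai\<^sup>T) (map transpose_mat Psi))"
      by (rule lc_cong) (use PsT Ai(1) Bi(1) P k' lr in auto)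
    finally show "Psi' ! k = lincomb_mats m m (\<lambda>l. P\<^sup>T $$ (k,l)) (map (\<lambda>G. Bi\<^sup>T * G * Ai\<^sup>T) (map transpose_mat Psi))" .
  qed
qed

lemma lc_append_zero:
  assumes Gs: "\<forall>G\<in>set Gs. G \<in> carrier_mat m n" and Hs: "\<forall>G\<in>set Hs. G \<in> carrier_mat m n"
    and cd: "\<And>i. i < length Gs \<Longrightarrow> c i = d i"
    and cz: "\<And>i. length Gs \<le> i \<Longrightarrow> i < length Gs + length Hs \<Longrightarrow> c i = 0"
  shows "lincomb_mats m n c (Gs @ Hs) = lincomb_mats m n d Gs"
proof -
  have GH: "\<forall>G\<in>set (Gs @ Hs). G \<in> carrier_mat m n" using Gs Hs by auto
  show ?thesis
  proof (rule eq_matI)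
    fix p q assume "p < dim_row (lincomb_mats m n d Gs)" "q < dim_col (lincomb_mats m n d Gs)"
    then have pq: "p < m" "q < n" using lc_dims[OF Gs] by auto
    have "(\<Sum>i<length (Gs @ Hs). c i * ((Gs @ Hs) ! i) $$ (p,q)) = (\<Sum>i<length Gs. c i * ((Gs @ Hs) ! i) $$ (p,q))"
      by (rule sum.mono_neutral_right) (use cz in auto)
    also have "\<dots> = (\<Sum>i<length Gs. d i * (Gs ! i) $$ (p,q))"
      by (rule sum.cong) (auto simp: cd nth_append)
    finally show "lincomb_mats m n c (Gs @ Hs) $$ (p,q) = lincomb_mats m n d Gs $$ (p,q)"
      unfolding lc_index[OF GH pq] lc_index[OF Gs pq] .
  qed (use lc_dims[OF Gs] lc_dims[OF GH] in auto)
qed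

lemma part_bc:
  assumes S: "state_fmt r m n Psi" and S': "state_fmt r m n Psi'"
    and C: "complementary m n Psi C" and C': "complementary m n Psi' C'"
    and cs: "cond_star r m n (U_mat m n (Psi @ C)) (U_mat m n (Psi' @ C'))"
  shows "slocc_equiv m n Psi' Psi \<or> (m = n \<and> slocc_equiv m n Psi' (map transpose_mat Psi))"
proof -
  define N where "N = m * n"
  define U where "U = U_mat m n (Psi @ C)"
  define U' where "U' = U_mat m n (Psi' @ C')"
  note F = comp_facts[OF S C, folded N_def U_def]
  note F' = comp_facts[OF S' C', folded N_def U'_def]
  have rN: "r \<le> N" using F(1) .
  have lr: "length Psi = r" and lr': "length Psi' = r" using S S' unfolding state_fmt_def by auto
  have Ps: "\<forall>G\<in>set Psi. G \<in> carrier_mat m n" and Ps': "\<forall>G\<in>set Psi'. G \<in> carrier_mat m n"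
    using S S' unfolding state_fmt_def by auto
  have Cs: "\<forall>G\<in>set C. G \<in> carrier_mat m n" using F(5) by auto
  obtain P Pb Y where P: "P \<in> carrier_mat r r" "invertible_mat P"
    and Pb: "Pb \<in> carrier_mat (N - r) (N - r)" "invertible_mat Pb" and Y: "Y \<in> carrier_mat r (N - r)"
    and rk0: "\<forall>a\<in>carrier_vec N. mrank (foldv m n (U * four_block_mat P Y (0\<^sub>m (N - r) r) Pb * mat_inv U' *\<^sub>v a))
        = mrank (foldv m n a)"
    using cs unfolding cond_star_def Let_def N_def U_def U'_def by blast
  define Pt where "Pt = four_block_mat P Y (0\<^sub>m (N - r) r) Pb"
  have Ptc: "Pt \<in> carrier_mat N N"
    using four_block_carrier_mat[OF P(1) Pb(1)] rN unfolding Pt_def by simp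
  have "det Pt = det P * det Pb" unfolding Pt_def by (rule det_four_block_mat_lower_left_zero[OF P(1) Y refl Pb(1)])
  then have "det Pt \<noteq> 0" using invertible_det_ne0[OF P(1) P(2)] invertible_det_ne0[OF Pb(1) Pb(2)] by simp
  have Uc: "U \<in> carrier_mat N N" and Ui: "invertible_mat U" using F(3,4) by auto
  have U'c: "U' \<in> carrier_mat N N" and U'i: "invertible_mat U'" using F'(3,4) by auto
  note IU' = mat_inv_props[OF U'c U'i]
  define M where "M = U * Pt * mat_inv U'"
  have Mc: "M \<in> carrier_mat N N" unfolding M_def using Uc Ptc IU'(1) by simp
  have "det M = det U * det Pt * det (mat_inv U')"
    unfolding M_def using Uc Ptc IU'(1) by (simp add: det_mult[of _ N])
  moreover have "det (mat_inv U') \<noteq> 0" using invertible_det_ne0[OF IU'(1) mat_inv_invertible[OF U'c U'i]] .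
  ultimately have "det M \<noteq> 0" using invertible_det_ne0[OF Uc Ui] \<open>det Pt \<noteq> 0\<close> by simp
  then have Mi: "invertible_mat M" using det_ne0_invertible[OF Mc] by simp
  have rk: "\<forall>a\<in>carrier_vec (m*n). mrank (foldv m n (M *\<^sub>v a)) = mrank (foldv m n a)"
    using rk0 unfolding M_def Pt_def N_def by simp
  obtain A B where A: "A \<in> carrier_mat m m" "invertible_mat A" and B: "B \<in> carrier_mat n n" "invertible_mat B"
    and form: "(\<forall>X\<in>carrier_mat m n. tmap m n M X = A * X * B) \<or>
      (m = n \<and> (\<forall>X\<in>carrier_mat m n. tmap m n M X = A * X\<^sup>T * B))"
    using MM[of M m n] Mc Mi rk unfolding N_def by blast
  have key: "tmap m n M (Psi' ! k) = lincomb_mats m n (\<lambda>l. P $$ (l,k)) Psi" if k: "k < r" for k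
  proof -
    have kN: "k < N" using k rN by simp
    have len': "length (Psi' @ C') = N" using F'(2) .
    have e: "U' *\<^sub>v unit_vec N k = vecz m n (Psi' ! k)"
      using U_unit[of k "Psi' @ C'" m n] len' k lr' unfolding U'_def by (simp add: nth_append)
    have e2: "mat_inv U' *\<^sub>v vecz m n (Psi' ! k) = unit_vec N k"
    proof -
      have "mat_inv U' *\<^sub>v vecz m n (Psi' ! k) = mat_inv U' *\<^sub>v (U' *\<^sub>v unit_vec N k)" using e by simp
      also have "\<dots> = (mat_inv U' * U') *\<^sub>v unit_vec N k"
        using assoc_mult_mat_vec[OF IU'(1) U'c, of "unit_vec N k"] by simp
      also have "\<dots> = unit_vec N k" using IU'(3) by simp
      finally show ?thesis .
    qed
    define w where "w = vec N (\<lambda>l. if l < r then P $$ (l,k) else 0)"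
    have e3: "Pt *\<^sub>v unit_vec N k = w"
    proof (rule eq_vecI)
      fix l assume "l < dim_vec w"
      then have l: "l < N" unfolding w_def by simp
      have "(Pt *\<^sub>v unit_vec N k) $ l = row Pt l \<bullet> unit_vec N k" using l Ptc by simp
      also have "\<dots> = row Pt l $ k" using kN by (intro scalar_prod_right_unit) auto
      also have "\<dots> = Pt $$ (l,k)" using l kN Ptc by simp
      also have "\<dots> = w $ l" unfolding Pt_def w_def using l k rN P(1) Pb(1) Y by simp
      finally show "(Pt *\<^sub>v unit_vec N k) $ l = w $ l" .
    qed (use Ptc in \<open>simp add: w_def\<close>)
    have wc: "w \<in> carrier_vec (length (Psi @ C))" using F(2) unfolding w_def N_def by simp
    have e4: "U *\<^sub>v w = vecz m n (lincomb_mats m n (\<lambda>l. P $$ (l,k)) Psi)"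
    proof -
      have "U *\<^sub>v w = vecz m n (lincomb_mats m n (\<lambda>i. w $ i) (Psi @ C))"
        unfolding U_def by (rule U_mult[OF F(5) wc])
      also have "lincomb_mats m n (\<lambda>i. w $ i) (Psi @ C) = lincomb_mats m n (\<lambda>l. P $$ (l,k)) Psi"
        by (rule lc_append_zero[OF Ps Cs]) (use lr rN F(2) in \<open>auto simp: w_def N_def\<close>)
      finally show ?thesis .
    qed
    have "M *\<^sub>v vecz m n (Psi' ! k) = U *\<^sub>v (Pt *\<^sub>v (mat_inv U' *\<^sub>v vecz m n (Psi' ! k)))"
      unfolding M_def using Uc Ptc IU'(1)
      by (simp add: assoc_mult_mat_vec[of _ N N _ N] N_def)
    also have "\<dots> = vecz m n (lincomb_mats m n (\<lambda>l. P $$ (l,k)) Psi)" using e2 e3 e4 by simp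
    finally have "M *\<^sub>v vecz m n (Psi' ! k) = vecz m n (lincomb_mats m n (\<lambda>l. P $$ (l,k)) Psi)" .
    then show ?thesis unfolding tmap_def using foldv_vecz[OF lc_carrier[OF Ps]] by simp
  qed
  from form show ?thesis
  proof
    assume f: "\<forall>X\<in>carrier_mat m n. tmap m n M X = A * X * B"
    have "\<forall>k<r. A * (Psi' ! k) * B = lincomb_mats m n (\<lambda>l. P $$ (l,k)) Psi"
      using f key Ps' lr' by auto
    then show ?thesis using slocc_from_AB[OF S S' A B P] by simp
  next
    assume f: "m = n \<and> (\<forall>X\<in>carrier_mat m n. tmap m n M X = A * X\<^sup>T * B)"
    then have mn: "n = m" by simp
    have "\<forall>k<r. A * (Psi' ! k)\<^sup>T * B = lincomb_mats m n (\<lambda>l. P $$ (l,k)) Psi"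
      using f key Ps' lr' by auto
    then have "slocc_equiv m m Psi' (map transpose_mat Psi)"
      using slocc_from_ABT[of r m Psi Psi' A B P] S S' A B P unfolding mn by simp
    then show ?thesis using mn by simp
  qed
qed

lemma mrank_sandwich:
  assumes A: "A \<in> carrier_mat m m" "invertible_mat A" and B: "B \<in> carrier_mat n n" "invertible_mat B"
    and X: "(X::complex mat) \<in> carrier_mat m n"
  shows "mrank (A * X * B) = mrank X"
proof -
  have AX: "A * X \<in> carrier_mat m n" using A X by simp
  have "vec_space.rank m (A * X * B) = vec_space.rank m (A * X)"
    by (rule vec_space.rank_mult_right_inv[OF B AX])
  also have "\<dots> = vec_space.rank m X" by (rule vec_space.rank_mult_left_inv[OF A X])
  finally show ?thesis unfolding mrank_def using A X B by simp
qed

lemma part_a: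
  assumes S: "state_fmt r m n Psi" and S': "state_fmt r m n Psi'"
    and C: "complementary m n Psi C" and C': "complementary m n Psi' C'"
    and sl: "slocc_equiv m n Psi' Psi"
  shows "cond_star r m n (U_mat m n (Psi @ C)) (U_mat m n (Psi' @ C'))"
proof -
  define N where "N = m * n"
  define U where "U = U_mat m n (Psi @ C)"
  define U' where "U' = U_mat m n (Psi' @ C')"
  note F = comp_facts[OF S C, folded N_def U_def]
  note F' = comp_facts[OF S' C', folded N_def U'_def]
  have rN: "r \<le> N" using F(1) .
  have lr: "length Psi = r" and lr': "length Psi' = r" using S S' unfolding state_fmt_def by auto
  have Ps: "\<forall>G\<in>set Psi. G \<in> carrier_mat m n" and Ps': "\<forall>G\<in>set Psi'. G \<in> carrier_mat m n"
    using S S' unfolding state_fmt_def by auto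
  have Cs: "\<forall>G\<in>set C. G \<in> carrier_mat m n" using F(5) by auto
  obtain P0 A1 A2 where P0: "P0 \<in> carrier_mat r r" "invertible_mat P0"
    and A1: "A1 \<in> carrier_mat m m" "invertible_mat A1" and A2: "A2 \<in> carrier_mat n n" "invertible_mat A2"
    and rel0: "\<forall>k<r. Psi' ! k = lincomb_mats m n (\<lambda>l. P0 $$ (k, l)) (map (\<lambda>G. A1 * G * A2\<^sup>T) Psi)"
    using sl lr unfolding slocc_equiv_def by auto
  obtain Ai1 where Ai1: "Ai1 \<in> carrier_mat m m" "A1 * Ai1 = 1\<^sub>m m" "Ai1 * A1 = 1\<^sub>m m" using A1 inv_mat_iff by blast
  obtain Ai2 where Ai2: "Ai2 \<in> carrier_mat n n" "A2 * Ai2 = 1\<^sub>m n" "Ai2 * A2 = 1\<^sub>m n" using A2 inv_mat_iff by blast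
  define T2 where "T2 = Ai2\<^sup>T"
  have T2c: "T2 \<in> carrier_mat n n" unfolding T2_def using Ai2 by simp
  have A2t: "A2\<^sup>T \<in> carrier_mat n n" using A2 by simp
  have T2a: "A2\<^sup>T * T2 = 1\<^sub>m n" unfolding T2_def using transpose_mult[OF Ai2(1) A2(1)] Ai2(3) by simp
  have T2b: "T2 * A2\<^sup>T = 1\<^sub>m n" unfolding T2_def using transpose_mult[OF A2(1) Ai2(1)] Ai2(2) by simp
  have Ai1i: "invertible_mat Ai1" by (rule invertible_inverse[OF A1(1) Ai1])
  have T2i: "invertible_mat T2" using invertible_inverse[OF A2t T2c T2a T2b] .
  define tK where "tK X = Ai1 * X * T2" for X
  have tKc: "tK X \<in> carrier_mat m n" if "X \<in> carrier_mat m n" for X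
    unfolding tK_def using that Ai1(1) T2c by simp
  have rel: "tK (Psi' ! k) = lincomb_mats m n (\<lambda>l. P0 $$ (k, l)) Psi" if k: "k < r" for k
  proof -
    have L: "lincomb_mats m n (\<lambda>l. P0 $$ (k, l)) Psi \<in> carrier_mat m n" by (rule lc_carrier[OF Ps])
    have "Psi' ! k = A1 * lincomb_mats m n (\<lambda>l. P0 $$ (k, l)) Psi * A2\<^sup>T"
      using rel0 k lc_mult[OF Ps A1(1) A2t] by simp
    then show ?thesis unfolding tK_def using inv_sandwich[OF A1(1) Ai1(1) Ai1(3) A2t T2c T2a L] by simp
  qed
  define KM where "KM = mat N N (\<lambda>(a,b). Ai1 $$ (a mod m, b mod m) * T2 $$ (b div m, a div m))"
  have KMc: "KM \<in> carrier_mat (m*n) (m*n)" unfolding KM_def N_def by simp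
  have tmK: "tmap m n KM X = tK X" if X: "X \<in> carrier_mat m n" for X
  proof (rule eq_matI)
    fix p q assume "p < dim_row (tK X)" "q < dim_col (tK X)"
    then have pq: "p < m" "q < n" using tKc[OF X] by auto
    have "tmap m n KM X $$ (p,q) = (\<Sum>j<n. \<Sum>i<m. KM $$ (q*m+p, j*m+i) * X $$ (i,j))"
      by (rule tmap_index[OF KMc pq])
    also have "\<dots> = (\<Sum>j<n. \<Sum>i<m. Ai1 $$ (p,i) * X $$ (i,j) * T2 $$ (j,q))"
    proof (intro sum.cong refl)
      fix j i assume "j \<in> {..<n}" "i \<in> {..<m}"
      then have ij: "j < n" "i < m" by auto
      have b1: "q*m+p < m*n" using idx_lt[OF pq(1) pq(2)] .
      have b2: "j*m+i < m*n" using idx_lt[OF ij(2) ij(1)] .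
      have "KM $$ (q*m+p, j*m+i) = Ai1 $$ (p,i) * T2 $$ (j,q)"
        unfolding KM_def N_def using b1 b2 pq ij by simp
      then show "KM $$ (q*m+p, j*m+i) * X $$ (i,j) = Ai1 $$ (p,i) * X $$ (i,j) * T2 $$ (j,q)"
        by (simp add: mult_ac)
    qed
    also have "\<dots> = tK X $$ (p,q)" unfolding tK_def by (rule mat_mult3_index[OF Ai1(1) X T2c pq, symmetric])
    finally show "tmap m n KM X $$ (p,q) = tK X $$ (p,q)" .
  qed (use tKc[OF X] in \<open>auto simp: tmap_def\<close>)
  have KMv: "KM *\<^sub>v vecz m n X = vecz m n (tK X)" if X: "X \<in> carrier_mat m n" for X
  proof -
    have "KM *\<^sub>v vecz m n X = vecz m n (foldv m n (KM *\<^sub>v vecz m n X))"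
      using KMc by (intro vecz_foldv[symmetric]) simp
    also have "\<dots> = vecz m n (tK X)" using tmK[OF X] unfolding tmap_def by simp
    finally show ?thesis .
  qed
  have KMi: "invertible_mat KM"
  proof (rule inj_invertible[OF KMc])
    fix v assume v: "v \<in> carrier_vec (m*n)" and Kv: "KM *\<^sub>v v = 0\<^sub>v (m*n)"
    define X where "X = foldv m n v"
    have X: "X \<in> carrier_mat m n" unfolding X_def by simp
    have vX: "vecz m n X = v" unfolding X_def using vecz_foldv[OF v] .
    have "vecz m n (tK X) = 0\<^sub>v (m*n)" using KMv[OF X] Kv vX by simp
    then have "tK X = 0\<^sub>m m n" using foldv_vecz[OF tKc[OF X]] foldv_zero by metis
    then have "A1 * tK X * A2\<^sup>T = 0\<^sub>m m n" using A1(1) A2t by simp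
    moreover have "A1 * tK X * A2\<^sup>T = X" unfolding tK_def by (rule inv_sandwich[OF Ai1(1) A1(1) Ai1(2) T2c A2t T2b X])
    ultimately have "X = 0\<^sub>m m n" by simp
    then show "v = 0\<^sub>v (m*n)" using vX vecz_zero by metis
  qed
  have Uc: "U \<in> carrier_mat N N" and Ui: "invertible_mat U" using F(3,4) by auto
  have U'c: "U' \<in> carrier_mat N N" and U'i: "invertible_mat U'" using F'(3,4) by auto
  note IU = mat_inv_props[OF Uc Ui]
  note IU' = mat_inv_props[OF U'c U'i]
  have KMc': "KM \<in> carrier_mat N N" using KMc unfolding N_def .
  define Pt where "Pt = mat_inv U * KM * U'"
  have Ptc: "Pt \<in> carrier_mat N N" unfolding Pt_def using IU(1) KMc' U'c by simp
  have UPt: "U * Pt * mat_inv U' = KM"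
  proof -
    have "U * Pt * mat_inv U' = U * (mat_inv U * KM * U') * mat_inv U'" unfolding Pt_def ..
    also have "\<dots> = KM" by (rule inv_sandwich[OF IU(1) Uc IU(2) U'c IU'(1) IU'(2) KMc'])
    finally show ?thesis .
  qed
  have "det Pt = det (mat_inv U) * det KM * det U'"
    unfolding Pt_def using IU(1) KMc' U'c by (simp add: det_mult[of _ N])
  moreover have "det (mat_inv U) \<noteq> 0" using invertible_det_ne0[OF IU(1) mat_inv_invertible[OF Uc Ui]] .
  ultimately have dPt: "det Pt \<noteq> 0"
    using invertible_det_ne0[OF KMc' KMi] invertible_det_ne0[OF U'c U'i] by simp
  have Ptcol: "Pt $$ (l,k) = (if l < r then P0 $$ (k,l) else 0)" if k: "k < r" and l: "l < N" for k l
  proof -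
    have kN: "k < N" using k rN by simp
    have len': "length (Psi' @ C') = N" using F'(2) .
    have Gk: "Psi' ! k \<in> carrier_mat m n" using Ps' k lr' by auto
    have e: "U' *\<^sub>v unit_vec N k = vecz m n (Psi' ! k)"
      using U_unit[of k "Psi' @ C'" m n] len' k lr' unfolding U'_def by (simp add: nth_append)
    define w where "w = vec N (\<lambda>l. if l < r then P0 $$ (k,l) else 0)"
    have wc: "w \<in> carrier_vec (length (Psi @ C))" using F(2) unfolding w_def N_def by simp
    have e4: "U *\<^sub>v w = vecz m n (lincomb_mats m n (\<lambda>l. P0 $$ (k,l)) Psi)"
    proof -
      have "U *\<^sub>v w = vecz m n (lincomb_mats m n (\<lambda>i. w $ i) (Psi @ C))"
        unfolding U_def by (rule U_mult[OF F(5) wc])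
      also have "lincomb_mats m n (\<lambda>i. w $ i) (Psi @ C) = lincomb_mats m n (\<lambda>l. P0 $$ (k,l)) Psi"
        by (rule lc_append_zero[OF Ps Cs]) (use lr rN F(2) in \<open>auto simp: w_def N_def\<close>)
      finally show ?thesis .
    qed
    have "Pt *\<^sub>v unit_vec N k = mat_inv U *\<^sub>v (KM *\<^sub>v (U' *\<^sub>v unit_vec N k))"
      unfolding Pt_def using IU(1) KMc' U'c by (simp add: assoc_mult_mat_vec[of _ N N _ N])
    also have "\<dots> = mat_inv U *\<^sub>v vecz m n (tK (Psi' ! k))" using e KMv[OF Gk] by simp
    also have "\<dots> = mat_inv U *\<^sub>v (U *\<^sub>v w)" using rel[OF k] e4 by simp
    also have "\<dots> = (mat_inv U * U) *\<^sub>v w" using IU(1) Uc wc F(2)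
      by (simp add: assoc_mult_mat_vec[of _ N N _ N])
    also have "\<dots> = w" using IU(3) wc F(2) by simp
    finally have "Pt *\<^sub>v unit_vec N k = w" .
    then have "(Pt *\<^sub>v unit_vec N k) $ l = w $ l" by simp
    moreover have "(Pt *\<^sub>v unit_vec N k) $ l = Pt $$ (l,k)"
    proof -
      have "(Pt *\<^sub>v unit_vec N k) $ l = row Pt l \<bullet> unit_vec N k" using l Ptc by simp
      also have "\<dots> = row Pt l $ k" using kN by (intro scalar_prod_right_unit) auto
      also have "\<dots> = Pt $$ (l,k)" using l kN Ptc by simp
      finally show ?thesis .
    qed
    ultimately show ?thesis using l unfolding w_def by simp
  qed
  define P where "P = mat r r (\<lambda>(l,k). Pt $$ (l,k))"
  define Y where "Y = mat r (N - r) (\<lambda>(l,k). Pt $$ (l, k + r))"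
  define Pb where "Pb = mat (N - r) (N - r) (\<lambda>(l,k). Pt $$ (l + r, k + r))"
  have Pc: "P \<in> carrier_mat r r" and Yc: "Y \<in> carrier_mat r (N - r)" and Pbc: "Pb \<in> carrier_mat (N - r) (N - r)"
    unfolding P_def Y_def Pb_def by auto
  have Pt4: "Pt = four_block_mat P Y (0\<^sub>m (N - r) r) Pb"
  proof (rule eq_matI)
    fix i j assume "i < dim_row (four_block_mat P Y (0\<^sub>m (N - r) r) Pb)" "j < dim_col (four_block_mat P Y (0\<^sub>m (N - r) r) Pb)"
    then have ij: "i < N" "j < N" using Pc Pbc rN by auto
    show "Pt $$ (i,j) = four_block_mat P Y (0\<^sub>m (N - r) r) Pb $$ (i,j)"
      using ij rN Ptcol[of j i] unfolding P_def Y_def Pb_def by auto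
  qed (use Ptc Pc Pbc rN in auto)
  have PP0: "P = P0\<^sup>T"
    by (rule eq_matI) (use Ptcol rN P0(1) in \<open>auto simp: P_def\<close>)
  have Pi: "invertible_mat P" unfolding PP0 using transpose_invertible[OF P0] .
  have "det Pt = det P * det Pb" unfolding Pt4 by (rule det_four_block_mat_lower_left_zero[OF Pc Yc refl Pbc])
  then have "det Pb \<noteq> 0" using dPt by auto
  then have Pbi: "invertible_mat Pb" using det_ne0_invertible[OF Pbc] by simp
  have rk: "mrank (foldv m n (KM *\<^sub>v a)) = mrank (foldv m n a)" if a: "a \<in> carrier_vec N" for a
  proof -
    define X where "X = foldv m n a"
    have X: "X \<in> carrier_mat m n" unfolding X_def by simp
    have "a = vecz m n X" unfolding X_def using vecz_foldv a unfolding N_def by metis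
    then have "foldv m n (KM *\<^sub>v a) = tK X" using KMv[OF X] foldv_vecz[OF tKc[OF X]] by simp
    also have "mrank \<dots> = mrank X" unfolding tK_def by (rule mrank_sandwich[OF Ai1(1) Ai1i T2c T2i X])
    finally show ?thesis unfolding X_def .
  qed
  show ?thesis unfolding cond_star_def Let_def
  proof (rule exI[of _ P], rule exI[of _ Pb], rule exI[of _ Y], intro conjI ballI)
    show "P \<in> carrier_mat r r" "invertible_mat P" "Y \<in> carrier_mat r (m * n - r)"
      "Pb \<in> carrier_mat (m * n - r) (m * n - r)" "invertible_mat Pb"
      using Pc Pi Yc Pbc Pbi unfolding N_def by auto
    fix a :: "complex vec" assume a: "a \<in> carrier_vec (m * n)"
    have "U_mat m n (Psi @ C) * four_block_mat P Y (0\<^sub>m (m * n - r) r) Pb * mat_inv (U_mat m n (Psi' @ C')) = KM"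
      using UPt unfolding Pt4 U_def U'_def N_def .
    then show "mrank (foldv m n (U_mat m n (Psi @ C) * four_block_mat P Y (0\<^sub>m (m * n - r) r) Pb *
        mat_inv (U_mat m n (Psi' @ C')) *\<^sub>v a)) = mrank (foldv m n a)"
      using rk a unfolding N_def by simp
  qed
qed


theorem corollary1:
  fixes r I1 I2 :: nat and Psi Psi' C C' :: "complex mat list"
  assumes "state_fmt r I1 I2 Psi" and "state_fmt r I1 I2 Psi'"
    and "lin_indep_mats I1 I2 Psi" and "lin_indep_mats I1 I2 Psi'"
    and "complementary I1 I2 Psi C" and "complementary I1 I2 Psi' C'"
  defines "U \<equiv> U_mat I1 I2 (Psi @ C)" and "U' \<equiv> U_mat I1 I2 (Psi' @ C')"
  shows "(slocc_equiv I1 I2 Psi' Psi \<longrightarrow> cond_star r I1 I2 U U')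
    \<and> (I1 \<noteq> I2 \<and> cond_star r I1 I2 U U' \<longrightarrow> slocc_equiv I1 I2 Psi' Psi)
    \<and> (I1 = I2 \<and> cond_star r I1 I2 U U' \<longrightarrow>
         slocc_equiv I1 I2 Psi' Psi \<or> slocc_equiv I1 I2 Psi' (map transpose_mat Psi))"
proof -
  have a: "slocc_equiv I1 I2 Psi' Psi \<longrightarrow> cond_star r I1 I2 U U'"
    using part_a[OF assms(1,2,5,6)] unfolding U_def U'_def by blast
  have bc: "cond_star r I1 I2 U U' \<longrightarrow>
      slocc_equiv I1 I2 Psi' Psi \<or> (I1 = I2 \<and> slocc_equiv I1 I2 Psi' (map transpose_mat Psi))"
    using part_bc[OF assms(1,2,5,6)] unfolding U_def U'_def by blast
  show ?thesis using a bc by blast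
qed

end
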